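(* For all $n\in\mathbb Z$, as operators on $\mathbb C[x_1,x_2,\ldots,y_1,y_2,\ldots]$, $$[X_n,L^+]=-\Big(n+\frac32\Big)X_{n+2}+\Big(2x_2-\frac{\partial}{\partial y_2}\Big)X_n,$$ $$[Y_n,L^+]=\Big(n-\frac32-\kappa_\infty+\sum_i\theta_i\Big)Y_{n-2}-Y_n\frac{\partial}{\partial y_2},$$ $$[X_n,x_2]=-\frac12X_{n+2},\qquad [Y_n,x_2]=-\frac12Y_{n-2},$$ where $x_2$ denotes multiplication by $x_2$ and $[P,Q]=PQ-QP$.
   Context: Let $\kappa_\infty,\theta_1,\dots,\theta_N$ be constants. On the polynomial ring in infinitely many variables $x=(x_1,x_2,\dots)$, $y=(y_1,y_2,\dots)$ define operators $X_n,Y_n$ ($n\in\mathbb Z$) by the generating series $$\sum_{n\in\mathbb Z}X_nk^n=\exp\Big(\sum_{m\ge1}\big(x_m-\tfrac1m\tfrac{\partial}{\partial y_m}\big)k^m\Big)\exp\Big(-\sum_{m\ge1}\tfrac1m\tfrac{\partial}{\partial x_m}k^{-m}\Big),$$ $$\sum_{n\in\mathbb Z}Y_nk^{-n}=\exp\Big(\sum_{m\ge1}\big(y_m-\tfrac1m\tfrac{\partial}{\partial x_m}\big)k^{-m}\Big)\exp\Big(-\sum_{m\ge1}\tfrac1m\tfrac{\partial}{\partial y_m}k^{m}\Big),$$ and $$L^+=\frac{x_1^2}{2}+\sum_{m\ge1}\Big((m+2)x_{m+2}\frac{\partial}{\partial x_m}-my_m\frac{\partial}{\partial y_{m+2}}\Big)-x_1\frac{\partial}{\partial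 y_1}-\Big(-\kappa_\infty+\sum_i\theta_i\Big)\frac{\partial}{\partial y_2}.$$ *)

theory Defs
  imports Complex_Main "HOL-Library.Poly_Mapping"
begin

text \<open>Variables x_m (Xv m) and y_m (Yv m); only indices m >= 1 are used by the ring
  C[x_1,x_2,...,y_1,y_2,...] (see in_R).\<close>
datatype var = Xv nat | Yv nat

fun var_index :: "var \<Rightarrow> nat" where
  "var_index (Xv m) = m" | "var_index (Yv m) = m"

type_synonym poly = "(var \<Rightarrow>\<^sub>0 nat) \<Rightarrow>\<^sub>0 complex"
type_synonym op = "poly \<Rightarrow> poly"

definition in_R :: "poly \<Rightarrow> bool" where
  "in_R p \<longleftrightarrow> (\<forall>\<alpha>\<in>Poly_Mapping.keys p. \<forall>v\<in>Poly_Mapping.keys \<alpha>. var_index v \<ge> 1)"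

definition cpoly :: "complex \<Rightarrow> poly" where
  "cpoly c = Poly_Mapping.single 0 c"

definition vmul :: "var \<Rightarrow> op" where
  "vmul v p = Poly_Mapping.single (Poly_Mapping.single v 1) 1 * p"

definition pd :: "var \<Rightarrow> op" where
  "pd v p = (\<Sum>\<alpha>\<in>Poly_Mapping.keys p. Poly_Mapping.single (\<alpha> - Poly_Mapping.single v 1)
                           (of_nat (Poly_Mapping.lookup \<alpha> v) * Poly_Mapping.lookup p \<alpha>))"

definition fsum :: "(nat \<Rightarrow> poly) \<Rightarrow> poly" where
  "fsum f = (\<Sum>j\<in>{j. f j \<noteq> 0}. f j)"

definition comps :: "nat \<Rightarrow> nat list set" where
  "comps j = {ms. (\<forall>m\<in>set ms. m \<ge> 1) \<and> sum_list ms = j}"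

text \<open>Coefficient of t^j in exp(\<Sum>_{m>=1} A_m t^m) = \<Sum>_r (1/r!) (\<Sum>_m A_m t^m)^r,
  for operator-valued A_m (products being compositions).\<close>
definition expcoeff :: "(nat \<Rightarrow> op) \<Rightarrow> nat \<Rightarrow> op" where
  "expcoeff A j p = (\<Sum>ms\<in>comps j.
      cpoly (1 / of_nat (fact (length ms))) * foldr (\<lambda>m f. A m \<circ> f) ms id p)"

definition Aop :: "nat \<Rightarrow> op" where
  "Aop m p = vmul (Xv m) p - cpoly (1 / of_nat m) * pd (Yv m) p"
definition Bop :: "nat \<Rightarrow> op" where
  "Bop m p = - (cpoly (1 / of_nat m) * pd (Xv m) p)"
definition Cop :: "nat \<Rightarrow> op" where
  "Cop m p = vmul (Yv m) p - cpoly (1 / of_nat m) * pd (Xv m) p"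
definition Dop :: "nat \<Rightarrow> op" where
  "Dop m p = - (cpoly (1 / of_nat m) * pd (Yv m) p)"

text \<open>X_n = coefficient of k^n in exp(\<Sum>A_m k^m) exp(\<Sum>B_m k^{-m}).\<close>
definition Xop :: "int \<Rightarrow> op" where
  "Xop n p = fsum (\<lambda>j. if n + int j \<ge> 0
                        then expcoeff Aop (nat (n + int j)) (expcoeff Bop j p) else 0)"

text \<open>Y_n = coefficient of k^{-n} in exp(\<Sum>C_m k^{-m}) exp(\<Sum>D_m k^m).\<close>
definition Yop :: "int \<Rightarrow> op" where
  "Yop n p = fsum (\<lambda>j. if n + int j \<ge> 0
                        then expcoeff Cop (nat (n + int j)) (expcoeff Dop j p) else 0)"

text \<open>L^+ with constant c = -kappa_inf + \<Sum>_i theta_i.\<close>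
definition Lplus :: "complex \<Rightarrow> op" where
  "Lplus c p = cpoly (1/2) * vmul (Xv 1) (vmul (Xv 1) p)
     + fsum (\<lambda>m. if m \<ge> 1 then
            cpoly (of_nat (m + 2)) * vmul (Xv (m + 2)) (pd (Xv m) p)
          - cpoly (of_nat m) * vmul (Yv m) (pd (Yv (m + 2)) p) else 0)
     - vmul (Xv 1) (pd (Yv 1) p)
     - cpoly c * pd (Yv 2) p"

end

theory Submission
  imports Defs
begin


abbreviation lk where "lk \<equiv> Poly_Mapping.lookup"
abbreviation sg where "sg \<equiv> Poly_Mapping.single"
abbreviation ks where "ks \<equiv> Poly_Mapping.keys"

lemma eq_single_plus_iff:
  fixes \<beta> q :: "var \<Rightarrow>\<^sub>0 nat"
  shows "(\<beta> = sg w 1 + q) \<longleftrightarrow> (lk \<beta> w \<ge> 1 \<and> q = \<beta> - sg w 1)"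
proof
  assume "\<beta> = sg w 1 + q"
  then show "lk \<beta> w \<ge> 1 \<and> q = \<beta> - sg w 1"
    by (auto simp: lookup_add poly_mapping_eq_iff fun_eq_iff lookup_minus lookup_single when_def)
next
  assume "lk \<beta> w \<ge> 1 \<and> q = \<beta> - sg w 1"
  then show "\<beta> = sg w 1 + q"
    by (auto simp: lookup_add poly_mapping_eq_iff fun_eq_iff lookup_minus lookup_single when_def)
qed

lemma Sum_any_delta_mult: "Sum_any (\<lambda>a. (if c = a then 1 else 0) * (F a::complex)) = F c"
proof -
  have "(\<lambda>a. (if c = a then 1 else 0) * F a) = (\<lambda>a. if a = c then F a else 0)" by auto
  then show ?thesis by (simp only: Sum_any.delta)
qed

lemma lookup_vmul:
  "lk (vmul w p) \<beta> = (if lk \<beta> w \<ge> 1 then lk p (\<beta> - sg w 1) else 0)"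
proof -
  have "lk (vmul w p) \<beta> = Sum_any (\<lambda>q. lk p q when \<beta> = sg w 1 + q)"
    unfolding vmul_def lookup_mult lookup_single when_def Sum_any_delta_mult ..
  also have "\<dots> = (if lk \<beta> w \<ge> 1 then lk p (\<beta> - sg w 1) else 0)"
    unfolding eq_single_plus_iff by (simp add: when_def)
  finally show ?thesis .
qed

lemma lookup_cpoly_mult: "lk (cpoly c * p) \<beta> = c * lk p \<beta>"
  unfolding cpoly_def mult_map_scale_conv_mult[symmetric]
  by (simp add: map.rep_eq when_def)

lemma lookup_pd: "lk (pd v p) \<beta> = of_nat (lk \<beta> v + 1) * lk p (\<beta> + sg v 1)"
proof -
  have "lk (pd v p) \<beta> = (\<Sum>\<alpha>\<in>Poly_Mapping.keys p. if \<alpha> - sg v 1 = \<beta> then of_nat (lk \<alpha> v) * lk p \<alpha> else 0)"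
    unfolding pd_def lookup_sum lookup_single by (simp add: when_def)
  also have "\<dots> = (\<Sum>\<alpha>\<in>Poly_Mapping.keys p. if \<alpha> = \<beta> + sg v 1 then of_nat (lk \<alpha> v) * lk p \<alpha> else 0)"
  proof (rule sum.cong[OF refl])
    fix \<alpha> assume "\<alpha> \<in> Poly_Mapping.keys p"
    show "(if \<alpha> - sg v 1 = \<beta> then of_nat (lk \<alpha> v) * lk p \<alpha> else 0) =
          (if \<alpha> = \<beta> + sg v 1 then of_nat (lk \<alpha> v) * lk p \<alpha> else (0::complex))"
    proof (cases "lk \<alpha> v = 0")
      case True
      then have "\<alpha> \<noteq> \<beta> + sg v 1" by (auto simp: lookup_add)
      then show ?thesis using True by simp
    next
      case False
      then have "(\<alpha> - sg v 1 = \<beta>) = (\<alpha> = \<beta> + sg v 1)"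
        by (auto simp: poly_mapping_eq_iff fun_eq_iff lookup_add lookup_minus lookup_single when_def)
      then show ?thesis by simp
    qed
  qed
  also have "\<dots> = of_nat (lk \<beta> v + 1) * lk p (\<beta> + sg v 1)"
    by (simp add: sum.delta lookup_add in_keys_iff)
  finally show ?thesis .
qed

lemma pd_add: "pd v (p + q) = pd v p + pd v q"
  by (simp add: poly_mapping_eq_iff fun_eq_iff lookup_pd lookup_add algebra_simps)
lemma pd_diff: "pd v (p - q) = pd v p - pd v q"
  by (simp add: poly_mapping_eq_iff fun_eq_iff lookup_pd lookup_minus algebra_simps)
lemma pd_uminus: "pd v (- p) = - pd v p"
  by (simp add: poly_mapping_eq_iff fun_eq_iff lookup_pd)
lemma pd_zero: "pd v 0 = 0"
  by (simp add: poly_mapping_eq_iff fun_eq_iff lookup_pd)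
lemma pd_cpoly: "pd v (cpoly c * p) = cpoly c * pd v p"
  by (simp add: poly_mapping_eq_iff fun_eq_iff lookup_pd lookup_cpoly_mult)

lemma vmul_add: "vmul v (p + q) = vmul v p + vmul v q"
  by (simp add: vmul_def algebra_simps)
lemma vmul_diff: "vmul v (p - q) = vmul v p - vmul v q"
  by (simp add: vmul_def algebra_simps)
lemma vmul_uminus: "vmul v (- p) = - vmul v p"
  by (simp add: vmul_def algebra_simps)
lemma vmul_zero: "vmul v 0 = 0"
  by (simp add: vmul_def)
lemma vmul_cpoly: "vmul v (cpoly c * p) = cpoly c * vmul v p"
  by (simp add: vmul_def algebra_simps)
lemma vmul_comm: "vmul v (vmul w p) = vmul w (vmul v p)"
  by (simp add: vmul_def algebra_simps)

lemma cpoly_mult_mult: "cpoly a * (cpoly b * p) = cpoly (a * b) * p"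
  by (simp add: cpoly_def mult_single mult.assoc[symmetric])
lemma cpoly_one: "cpoly 1 = 1"
  by (simp add: cpoly_def)
lemma cpoly_zero: "cpoly 0 = 0"
  by (simp add: cpoly_def)
lemma cpoly_add: "cpoly (a + b) = cpoly a + cpoly b"
  by (simp add: cpoly_def single_add)
lemma cpoly_diff: "cpoly (a - b) = cpoly a - cpoly b"
  by (simp add: cpoly_def single_diff)
lemma cpoly_uminus: "cpoly (- a) = - cpoly a"
  by (simp add: cpoly_def single_uminus)

lemma mono_aux1: "lk (x::var\<Rightarrow>\<^sub>0nat) w \<ge> Suc 0 \<Longrightarrow> sg w (Suc 0) + (x - sg w (Suc 0)) = x"
  by (auto simp: poly_mapping_eq_iff fun_eq_iff lookup_add lookup_minus lookup_single when_def)
lemma mono_aux2: "lk (x::var\<Rightarrow>\<^sub>0nat) w \<ge> Suc 0 \<Longrightarrow> v \<noteq> w \<Longrightarrow> x + sg v (Suc 0) - sg w (Suc 0) = sg v (Suc 0) + (x - sg w (Suc 0))"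
  by (auto simp: poly_mapping_eq_iff fun_eq_iff lookup_add lookup_minus lookup_single when_def)

lemma pd_vmul: "pd v (vmul w p) = vmul w (pd v p) + (if v = w then p else 0)"
  by (auto simp: poly_mapping_eq_iff fun_eq_iff lookup_pd lookup_vmul lookup_add lookup_minus lookup_single when_def algebra_simps mono_aux1 mono_aux2)

lemma pd_comm: "pd v (pd w p) = pd w (pd v p)"
  by (simp add: poly_mapping_eq_iff fun_eq_iff lookup_pd lookup_add lookup_single when_def algebra_simps)


definition dl :: "nat \<Rightarrow> nat list \<Rightarrow> nat list" where
  "dl i xs = take i xs @ drop (Suc i) xs"
definition ins :: "nat \<Rightarrow> nat \<Rightarrow> nat list \<Rightarrow> nat list" where
  "ins k m xs = take k xs @ m # drop k xs"

lemma length_le_sum_list: "\<forall>m\<in>set ms. m \<ge> (1::nat) \<Longrightarrow> length ms \<le> sum_list ms"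
  by (induction ms) auto

lemma comps_finite: "finite (comps j)"
proof -
  have "comps j \<subseteq> {xs. set xs \<subseteq> {..j} \<and> length xs \<le> j}"
    unfolding comps_def using length_le_sum_list member_le_sum_list by fastforce
  moreover have "finite {xs. set xs \<subseteq> {..j} \<and> length xs \<le> j}"
    by (rule finite_lists_length_le) simp
  ultimately show ?thesis by (rule finite_subset)
qed

lemma sum_list_split_nth: "i < length ms \<Longrightarrow> sum_list ms = sum_list (dl i ms) + (ms ! i :: nat)"
proof -
  assume i: "i < length ms"
  have "ms = take i ms @ ms ! i # drop (Suc i) ms" using i by (simp add: id_take_nth_drop)
  then have "sum_list ms = sum_list (take i ms @ ms ! i # drop (Suc i) ms)" by simp
  then show ?thesis by (simp add: dl_def)
qed

lemma comps_bij_sum: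
  fixes g :: "nat \<Rightarrow> nat list \<Rightarrow> 'b::comm_monoid_add"
  shows "(\<Sum>ms\<in>comps j. \<Sum>i<length ms. g (ms ! i) (dl i ms))
       = (\<Sum>m\<in>{1..j}. \<Sum>ms\<in>comps (j - m). \<Sum>i<Suc (length ms). g m ms)"
proof -
  let ?S = "Sigma (comps j) (\<lambda>ms. {..<length ms})"
  let ?T = "Sigma {1..j} (\<lambda>m. Sigma (comps (j - m)) (\<lambda>ms. {..<Suc (length ms)}))"
  have L: "(\<Sum>ms\<in>comps j. \<Sum>i<length ms. g (ms ! i) (dl i ms)) = (\<Sum>(ms,i)\<in>?S. g (ms ! i) (dl i ms))"
    by (rule sum.Sigma) (auto simp: comps_finite)
  have R: "(\<Sum>m\<in>{1..j}. \<Sum>ms\<in>comps (j - m). \<Sum>i<Suc (length ms). g m ms)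
         = (\<Sum>(m,ms,i)\<in>?T. g m ms)"
  proof -
    have "(\<Sum>m\<in>{1..j}. \<Sum>ms\<in>comps (j - m). \<Sum>i<Suc (length ms). g m ms)
        = (\<Sum>m\<in>{1..j}. \<Sum>(ms,i)\<in>Sigma (comps (j - m)) (\<lambda>ms. {..<Suc (length ms)}). g m ms)"
      by (rule sum.cong[OF refl], rule sum.Sigma) (auto simp: comps_finite)
    also have "\<dots> = (\<Sum>(m,msi)\<in>?T. (case msi of (ms,i) \<Rightarrow> g m ms))"
      by (rule sum.Sigma) (auto simp: comps_finite)
    finally show ?thesis by (simp add: case_prod_beta)
  qed
  have B: "(\<Sum>(ms,i)\<in>?S. g (ms ! i) (dl i ms)) = (\<Sum>(m,ms,i)\<in>?T. g m ms)"
  proof (rule sum.reindex_bij_witness[where i = "\<lambda>(m,ms,k). (ins k m ms, k)"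
                                      and j = "\<lambda>(ms,i). (ms ! i, dl i ms, i)"])
    fix a assume "a \<in> ?S"
    then obtain ms i where a: "a = (ms, i)" "ms \<in> comps j" "i < length ms" by auto
    have "ins i (ms ! i) (dl i ms) = ms"
      using a(3) by (simp add: ins_def dl_def min_def id_take_nth_drop[symmetric])
    then show "(\<lambda>(m,ms,k). (ins k m ms, k)) ((\<lambda>(ms,i). (ms ! i, dl i ms, i)) a) = a"
      using a by simp
    have s: "sum_list ms = sum_list (dl i ms) + ms ! i" using sum_list_split_nth a(3) .
    have m1: "ms ! i \<ge> 1" using a(2,3) by (auto simp: comps_def)
    have sd: "\<forall>m\<in>set (dl i ms). m \<ge> 1" using a(2)
      by (auto simp: comps_def dl_def dest: in_set_takeD in_set_dropD)
    show "(\<lambda>(ms,i). (ms ! i, dl i ms, i)) a \<in> ?T"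
      using a s m1 sd by (auto simp: comps_def dl_def)
    show "(\<lambda>(m,ms,k). g m ms) ((\<lambda>(ms,i). (ms ! i, dl i ms, i)) a) = (\<lambda>(ms,i). g (ms ! i) (dl i ms)) a"
      using a by simp
  next
    fix b assume "b \<in> ?T"
    then obtain m ms k where b: "b = (m, ms, k)" "1 \<le> m" "m \<le> j" "ms \<in> comps (j - m)" "k < Suc (length ms)"
      by auto
    have "ins k m ms ! k = m" using b(5) by (simp add: ins_def nth_append)
    moreover have "dl k (ins k m ms) = ms" using b(5) by (simp add: ins_def dl_def)
    ultimately show "(\<lambda>(ms,i). (ms ! i, dl i ms, i)) ((\<lambda>(m,ms,k). (ins k m ms, k)) b) = b"
      using b by simp
    have "sum_list (ins k m ms) = sum_list ms + m"
    proof -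
      have "sum_list ms = sum_list (take k ms) + sum_list (drop k ms)"
        by (metis append_take_drop_id sum_list_append)
      then show ?thesis by (simp add: ins_def)
    qed
    moreover have "\<forall>x\<in>set (ins k m ms). x \<ge> 1"
      using b by (auto simp: comps_def ins_def dest: in_set_takeD in_set_dropD)
    ultimately show "(\<lambda>(m,ms,k). (ins k m ms, k)) b \<in> ?S"
      using b by (auto simp: comps_def ins_def)
  qed
  show ?thesis using L R B by simp
qed


definition lin :: "op \<Rightarrow> bool" where
  "lin f \<longleftrightarrow> (\<forall>p q. f (p + q) = f p + f q) \<and> (\<forall>c p. f (cpoly c * p) = cpoly c * f p)"

lemma lin_add: "lin f \<Longrightarrow> f (p + q) = f p + f q" by (simp add: lin_def)
lemma lin_cpoly: "lin f \<Longrightarrow> f (cpoly c * p) = cpoly c * f p" by (simp add: lin_def)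
lemma lin_zero: "lin f \<Longrightarrow> f 0 = 0"
  using lin_cpoly[of f 0 0] by (simp add: cpoly_zero)
lemma lin_uminus: "lin f \<Longrightarrow> f (- p) = - f p"
  using lin_cpoly[of f "-1" p] by (simp add: cpoly_uminus cpoly_one)
lemma lin_diff: "lin f \<Longrightarrow> f (p - q) = f p - f q"
  using lin_add[of f p "-q"] lin_uminus[of f q] by simp
lemma lin_sum: "lin f \<Longrightarrow> f (sum g S) = (\<Sum>x\<in>S. f (g x))"
  by (induction S rule: infinite_finite_induct) (auto simp: lin_zero lin_add)

lemma lin_pd: "lin (pd v)" by (simp add: lin_def pd_add pd_cpoly)
lemma lin_vmul: "lin (vmul v)" by (simp add: lin_def vmul_add vmul_cpoly)
lemma lin_scal: "lin (\<lambda>p. cpoly c * p)" by (simp add: lin_def algebra_simps)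
lemma lin_id: "lin (\<lambda>p. p)" by (simp add: lin_def)
lemma lin_comp: "lin f \<Longrightarrow> lin g \<Longrightarrow> lin (\<lambda>p. f (g p))" by (simp add: lin_def)
lemma lin_plus: "lin f \<Longrightarrow> lin g \<Longrightarrow> lin (\<lambda>p. f p + g p)" by (simp add: lin_def algebra_simps)
lemma lin_minus: "lin f \<Longrightarrow> lin g \<Longrightarrow> lin (\<lambda>p. f p - g p)" by (simp add: lin_def algebra_simps)
lemma lin_neg: "lin f \<Longrightarrow> lin (\<lambda>p. - f p)" by (simp add: lin_def algebra_simps)

lemma lin_Aop: "lin (Aop m)"
  unfolding lin_def Aop_def by (simp add: vmul_add vmul_cpoly pd_add pd_cpoly distrib_left right_diff_distrib mult.left_commute)
lemma lin_Bop: "lin (Bop m)"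
  unfolding lin_def Bop_def by (simp add: pd_add pd_cpoly distrib_left right_diff_distrib mult.left_commute)
lemma lin_Cop: "lin (Cop m)"
  unfolding lin_def Cop_def by (simp add: vmul_add vmul_cpoly pd_add pd_cpoly distrib_left right_diff_distrib mult.left_commute)
lemma lin_Dop: "lin (Dop m)"
  unfolding lin_def Dop_def by (simp add: pd_add pd_cpoly distrib_left right_diff_distrib mult.left_commute)

definition FL :: "(nat \<Rightarrow> op) \<Rightarrow> nat list \<Rightarrow> op" where
  "FL A ms = foldr (\<lambda>m f. A m \<circ> f) ms id"

lemma FL_Nil[simp]: "FL A [] q = q" by (simp add: FL_def)
lemma FL_Cons[simp]: "FL A (m # ms) q = A m (FL A ms q)" by (simp add: FL_def)

lemma expcoeff_FL: "expcoeff A j p = (\<Sum>ms\<in>comps j. cpoly (1 / of_nat (fact (length ms))) * FL A ms p)"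
  by (simp add: expcoeff_def FL_def)

lemma lin_FL: "(\<And>m. lin (A m)) \<Longrightarrow> lin (FL A ms)"
proof (induction ms)
  case Nil then show ?case by (simp add: lin_def)
next
  case (Cons m ms)
  have "lin (FL A ms)" using Cons.IH Cons.prems by blast
  then have "lin (\<lambda>p. A m (FL A ms p))" by (rule lin_comp[OF Cons.prems])
  then show ?case by (simp add: lin_def)
qed

lemma lin_expcoeff:
  assumes "\<And>m. lin (A m)" shows "lin (expcoeff A j)"
  unfolding lin_def
proof (intro allI conjI)
  fix p q
  show "expcoeff A j (p + q) = expcoeff A j p + expcoeff A j q"
    unfolding expcoeff_FL by (simp add: lin_add[OF lin_FL[OF assms]] distrib_left sum.distrib)
next
  fix c p
  show "expcoeff A j (cpoly c * p) = cpoly c * expcoeff A j p"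
  proof -
    have "expcoeff A j (cpoly c * p) = (\<Sum>ms\<in>comps j. cpoly (1 / of_nat (fact (length ms))) * (cpoly c * FL A ms p))"
      unfolding expcoeff_FL by (rule sum.cong[OF refl]) (simp only: lin_cpoly[OF lin_FL[OF assms]])
    also have "\<dots> = (\<Sum>ms\<in>comps j. cpoly c * (cpoly (1 / of_nat (fact (length ms))) * FL A ms p))"
      by (rule sum.cong[OF refl]) (rule mult.left_commute)
    also have "\<dots> = cpoly c * expcoeff A j p"
      unfolding expcoeff_FL by (rule sum_distrib_left[symmetric])
    finally show ?thesis .
  qed
qed

lemma dl_0_Cons[simp]: "dl 0 (m # ms) = ms" by (simp add: dl_def)
lemma dl_Suc_Cons[simp]: "dl (Suc i) (m # ms) = m # dl i ms" by (simp add: dl_def)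
lemma length_dl: "i < length ms \<Longrightarrow> length (dl i ms) = length ms - 1"
  by (simp add: dl_def)

lemma FL_comm:
  assumes linA: "\<And>m. lin (A m)"
    and rel: "\<And>m q. A m (Z q) = Z (A m q) + cpoly (c m) * q"
  shows "FL A ms (Z q) = Z (FL A ms q) + (\<Sum>i<length ms. cpoly (c (ms ! i)) * FL A (dl i ms) q)"
proof (induction ms)
  case Nil then show ?case by simp
next
  case (Cons m ms)
  have "FL A (m # ms) (Z q) = A m (Z (FL A ms q) + (\<Sum>i<length ms. cpoly (c (ms ! i)) * FL A (dl i ms) q))"
    using Cons by simp
  also have "\<dots> = Z (A m (FL A ms q)) + cpoly (c m) * FL A ms q
       + (\<Sum>i<length ms. cpoly (c (ms ! i)) * A m (FL A (dl i ms) q))"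
    by (simp only: lin_add[OF linA] lin_sum[OF linA] lin_cpoly[OF linA] rel)
  also have "\<dots> = Z (FL A (m # ms) q) + (\<Sum>i<length (m # ms). cpoly (c ((m # ms) ! i)) * FL A (dl i (m # ms)) q)"
    by (simp only: length_Cons sum.lessThan_Suc_shift) (simp add: algebra_simps)
  finally show ?case .
qed

lemma cpoly_of_nat: "cpoly (of_nat n) = of_nat n"
  by (simp add: cpoly_def)

lemma div_aux: "(a::complex) \<noteq> 0 \<Longrightarrow> a * (1 / (a * x)) = 1 / x"
  by (cases "x = 0") (simp_all add: field_simps)

lemma fact_aux: "of_nat (Suc r) * (1 / of_nat (fact (Suc r))) = (1 / of_nat (fact r) :: complex)"
proof -
  have f: "of_nat (fact (Suc r)) = (of_nat (Suc r) * of_nat (fact r) :: complex)"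
    by (simp only: fact_Suc of_nat_mult of_nat_id)
  have nz: "(of_nat (Suc r) :: complex) \<noteq> 0" by (rule of_nat_neq_0)
  show ?thesis by (simp only: f div_aux[OF nz])
qed

lemma expcoeff_comm:
  assumes linA: "\<And>m. lin (A m)" and linZ: "lin Z"
    and rel: "\<And>m q. A m (Z q) = Z (A m q) + cpoly (c m) * q"
  shows "expcoeff A j (Z q) = Z (expcoeff A j q) + (\<Sum>m\<in>{1..j}. cpoly (c m) * expcoeff A (j - m) q)"
proof -
  define g where "g m ms = cpoly (1 / of_nat (fact (Suc (length ms))) * c m) * FL A ms q" for m ms
  have "expcoeff A j (Z q) = (\<Sum>ms\<in>comps j. cpoly (1 / of_nat (fact (length ms))) *
          (Z (FL A ms q) + (\<Sum>i<length ms. cpoly (c (ms ! i)) * FL A (dl i ms) q)))"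
    unfolding expcoeff_FL using FL_comm[OF linA rel] by simp
  also have "\<dots> = (\<Sum>ms\<in>comps j. cpoly (1 / of_nat (fact (length ms))) * Z (FL A ms q))
      + (\<Sum>ms\<in>comps j. \<Sum>i<length ms. g (ms ! i) (dl i ms))"
  proof -
    have "\<And>ms i. i < length ms \<Longrightarrow> cpoly (1 / of_nat (fact (length ms))) * (cpoly (c (ms ! i)) * FL A (dl i ms) q)
           = g (ms ! i) (dl i ms)"
    proof -
      fix ms :: "nat list" and i assume i: "i < length ms"
      then have "Suc (length (dl i ms)) = length ms" by (simp add: length_dl)
      then show "cpoly (1 / of_nat (fact (length ms))) * (cpoly (c (ms ! i)) * FL A (dl i ms) q)
           = g (ms ! i) (dl i ms)"
        by (simp add: g_def cpoly_mult_mult mult.commute)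
    qed
    then show ?thesis
      by (simp add: sum.distrib algebra_simps sum_distrib_left)
  qed
  also have "(\<Sum>ms\<in>comps j. cpoly (1 / of_nat (fact (length ms))) * Z (FL A ms q)) = Z (expcoeff A j q)"
    unfolding expcoeff_FL by (simp add: lin_sum[OF linZ] lin_cpoly[OF linZ])
  also have "(\<Sum>ms\<in>comps j. \<Sum>i<length ms. g (ms ! i) (dl i ms))
      = (\<Sum>m\<in>{1..j}. \<Sum>ms\<in>comps (j - m). \<Sum>i<Suc (length ms). g m ms)"
    by (rule comps_bij_sum)
  also have "\<dots> = (\<Sum>m\<in>{1..j}. cpoly (c m) * expcoeff A (j - m) q)"
  proof (rule sum.cong[OF refl])
    fix m
    have "\<And>ms. (\<Sum>i<Suc (length ms). g m ms) = cpoly (c m) * (cpoly (1 / of_nat (fact (length ms))) * FL A ms q)"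
    proof -
      fix ms
      have "(\<Sum>i<Suc (length ms). g m ms) = of_nat (Suc (length ms)) * g m ms" by simp
      also have "\<dots> = cpoly (of_nat (Suc (length ms))) * g m ms" by (simp only: cpoly_of_nat)
      also have "\<dots> = cpoly (of_nat (Suc (length ms)) * (1 / of_nat (fact (Suc (length ms))) * c m)) * FL A ms q"
        unfolding g_def cpoly_mult_mult ..
      also have "of_nat (Suc (length ms)) * (1 / of_nat (fact (Suc (length ms))) * c m) = c m * (1 / of_nat (fact (length ms)))"
        using fact_aux[of "length ms"] by (metis mult.assoc mult.commute)
      also have "cpoly (c m * (1 / of_nat (fact (length ms)))) * FL A ms q = cpoly (c m) * (cpoly (1 / of_nat (fact (length ms))) * FL A ms q)"
        unfolding cpoly_mult_mult ..
      finally show "(\<Sum>i<Suc (length ms). g m ms) = cpoly (c m) * (cpoly (1 / of_nat (fact (length ms))) * FL A ms q)" .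
    qed
    then show "(\<Sum>ms\<in>comps (j - m). \<Sum>i<Suc (length ms). g m ms) = cpoly (c m) * expcoeff A (j - m) q"
      unfolding expcoeff_FL by (simp add: sum_distrib_left)
  qed
  finally show ?thesis .
qed


lemma FL_pick:
  assumes comm: "\<And>a b q. A a (A b q) = A b (A a q)"
  shows "i < length ms \<Longrightarrow> FL A ms q = A (ms ! i) (FL A (dl i ms) q)"
proof (induction ms arbitrary: i)
  case Nil then show ?case by simp
next
  case (Cons m ms)
  show ?case
  proof (cases i)
    case 0 then show ?thesis by simp
  next
    case (Suc i')
    then have i': "i' < length ms" using Cons.prems by simp
    have "FL A (m # ms) q = A m (A (ms ! i') (FL A (dl i' ms) q))"
      using Cons.IH[OF i'] by simp
    also have "\<dots> = A (ms ! i') (A m (FL A (dl i' ms) q))" by (rule comm)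
    finally show ?thesis using Suc by simp
  qed
qed

lemma cpoly_sum: "cpoly (sum f S) = (\<Sum>x\<in>S. cpoly (f x))"
  by (induction S rule: infinite_finite_induct) (auto simp: cpoly_zero cpoly_add)

lemma expcoeff_rec:
  assumes linA: "\<And>m. lin (A m)" and comm: "\<And>a b q. A a (A b q) = A b (A a q)"
  shows "cpoly (of_nat j) * expcoeff A j q = (\<Sum>m\<in>{1..j}. cpoly (of_nat m) * A m (expcoeff A (j - m) q))"
proof -
  define g where "g m ms = cpoly (1 / of_nat (fact (Suc (length ms))) * of_nat m) * A m (FL A ms q)" for m ms
  have step: "cpoly (of_nat j) * (cpoly (1 / of_nat (fact (length ms))) * FL A ms q)
      = (\<Sum>i<length ms. g (ms ! i) (dl i ms))" if ms: "ms \<in> comps j" for ms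
  proof -
    have j: "j = (\<Sum>i<length ms. ms ! i)"
      using ms by (simp add: comps_def sum_list_sum_nth atLeast0LessThan)
    have "cpoly (of_nat j) * (cpoly (1 / of_nat (fact (length ms))) * FL A ms q)
        = (\<Sum>i<length ms. cpoly (of_nat (ms ! i)) * (cpoly (1 / of_nat (fact (length ms))) * FL A ms q))"
      unfolding j of_nat_sum cpoly_sum sum_distrib_right ..
    also have "\<dots> = (\<Sum>i<length ms. g (ms ! i) (dl i ms))"
    proof (rule sum.cong[OF refl])
      fix i assume "i \<in> {..<length ms}"
      then have i: "i < length ms" by simp
      then have l: "Suc (length (dl i ms)) = length ms" by (simp add: length_dl)
      have "cpoly (of_nat (ms ! i)) * (cpoly (1 / of_nat (fact (length ms))) * FL A ms q)
          = cpoly (of_nat (ms ! i) * (1 / of_nat (fact (length ms)))) * A (ms ! i) (FL A (dl i ms) q)"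
        using FL_pick[of A, OF comm i, of q] by (simp add: cpoly_mult_mult)
      also have "\<dots> = g (ms ! i) (dl i ms)"
        unfolding g_def l by (simp add: mult.commute)
      finally show "cpoly (of_nat (ms ! i)) * (cpoly (1 / of_nat (fact (length ms))) * FL A ms q) = g (ms ! i) (dl i ms)" .
    qed
    finally show ?thesis .
  qed
  have "cpoly (of_nat j) * expcoeff A j q = (\<Sum>ms\<in>comps j. \<Sum>i<length ms. g (ms ! i) (dl i ms))"
    unfolding expcoeff_FL sum_distrib_left using step by (rule sum.cong[OF refl])
  also have "\<dots> = (\<Sum>m\<in>{1..j}. \<Sum>ms\<in>comps (j - m). \<Sum>i<Suc (length ms). g m ms)"
    by (rule comps_bij_sum)
  also have "\<dots> = (\<Sum>m\<in>{1..j}. cpoly (of_nat m) * A m (expcoeff A (j - m) q))"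
  proof (rule sum.cong[OF refl])
    fix m
    have e: "(\<Sum>i<Suc (length ms). g m ms) = cpoly (of_nat m) * A m (cpoly (1 / of_nat (fact (length ms))) * FL A ms q)" for ms
    proof -
      have "(\<Sum>i<Suc (length ms). g m ms) = of_nat (Suc (length ms)) * g m ms" by simp
      also have "\<dots> = cpoly (of_nat (Suc (length ms))) * g m ms" by (simp only: cpoly_of_nat)
      also have "\<dots> = cpoly (of_nat (Suc (length ms)) * (1 / of_nat (fact (Suc (length ms))) * of_nat m)) * A m (FL A ms q)"
        unfolding g_def cpoly_mult_mult ..
      also have "of_nat (Suc (length ms)) * (1 / of_nat (fact (Suc (length ms))) * of_nat m) = of_nat m * (1 / of_nat (fact (length ms)) :: complex)"
        using fact_aux[of "length ms"] by (metis mult.assoc mult.commute)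
      also have "cpoly (of_nat m * (1 / of_nat (fact (length ms)))) * A m (FL A ms q) = cpoly (of_nat m) * A m (cpoly (1 / of_nat (fact (length ms))) * FL A ms q)"
        unfolding cpoly_mult_mult[symmetric] lin_cpoly[OF linA] ..
      finally show ?thesis .
    qed
    show "(\<Sum>ms\<in>comps (j - m). \<Sum>i<Suc (length ms). g m ms) = cpoly (of_nat m) * A m (expcoeff A (j - m) q)"
      unfolding e expcoeff_FL lin_sum[OF linA] sum_distrib_left ..
  qed
  finally show ?thesis .
qed

definition wt :: "(var \<Rightarrow> nat) \<Rightarrow> (var \<Rightarrow>\<^sub>0 nat) \<Rightarrow> nat" where
  "wt f \<alpha> = Sum_any (\<lambda>v. f v * lk \<alpha> v)"

lemma wt_add_single: "wt f (\<beta> + sg v 1) = wt f \<beta> + f v"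
proof -
  have fin1: "finite {u. f u * lk \<beta> u \<noteq> 0}"
    by (rule finite_subset[of _ "Poly_Mapping.keys \<beta>"]) (auto simp: in_keys_iff)
  have fin2: "finite {u. f u * lk (sg v 1) u \<noteq> 0}"
    by (rule finite_subset[of _ "{v}"]) (auto simp: lookup_single when_def)
  have "wt f (\<beta> + sg v 1) = Sum_any (\<lambda>u. f u * lk \<beta> u + f u * lk (sg v 1) u)"
    unfolding wt_def lookup_add distrib_left ..
  also have "\<dots> = wt f \<beta> + Sum_any (\<lambda>u. f u * lk (sg v 1) u)"
    unfolding wt_def using Sum_any.distrib[OF fin1 fin2] .
  also have "Sum_any (\<lambda>u. f u * lk (sg v 1) u) = f v"
  proof -
    have "(\<lambda>u. f u * lk (sg v (1::nat)) u) = (\<lambda>u. if u = v then f u else 0)"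
      by (auto simp: lookup_single when_def)
    then show ?thesis by (simp only: Sum_any.delta)
  qed
  finally show ?thesis .
qed

lemma wt_add_single': "wt f (\<beta> + sg v (Suc 0)) = wt f \<beta> + f v"
  using wt_add_single[of f \<beta> v] by (simp only: One_nat_def)

lemma keys_pd: "\<beta> \<in> Poly_Mapping.keys (pd v p) \<Longrightarrow> \<beta> + sg v 1 \<in> Poly_Mapping.keys p"
  by (auto simp: in_keys_iff lookup_pd)

lemma keys_cpoly: "\<beta> \<in> Poly_Mapping.keys (cpoly c * p) \<Longrightarrow> \<beta> \<in> Poly_Mapping.keys p"
  by (auto simp: in_keys_iff lookup_cpoly_mult)

lemma FL_keys:
  assumes h: "\<And>m p \<beta>. \<beta> \<in> Poly_Mapping.keys (A m p) \<Longrightarrow> \<exists>\<alpha>\<in>Poly_Mapping.keys p. wt f \<alpha> = wt f \<beta> + m"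
  shows "\<beta> \<in> Poly_Mapping.keys (FL A ms p) \<Longrightarrow> \<exists>\<alpha>\<in>Poly_Mapping.keys p. wt f \<alpha> = wt f \<beta> + sum_list ms"
proof (induction ms arbitrary: \<beta>)
  case Nil then show ?case by auto
next
  case (Cons m ms)
  then have b: "\<beta> \<in> Poly_Mapping.keys (A m (FL A ms p))" by simp
  obtain \<gamma> where g1: "\<gamma> \<in> Poly_Mapping.keys (FL A ms p)" and g2: "wt f \<gamma> = wt f \<beta> + m"
    using h[OF b] by blast
  obtain \<alpha> where a1: "\<alpha> \<in> Poly_Mapping.keys p" and a2: "wt f \<alpha> = wt f \<gamma> + sum_list ms"
    using Cons.IH[OF g1] by blast
  show ?case
  proof (rule bexI[OF _ a1])
    show "wt f \<alpha> = wt f \<beta> + sum_list (m # ms)" using a2 g2 by simp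
  qed
qed

lemma expcoeff_vanish:
  assumes h: "\<And>m p \<beta>. \<beta> \<in> Poly_Mapping.keys (A m p) \<Longrightarrow> \<exists>\<alpha>\<in>Poly_Mapping.keys p. wt f \<alpha> = wt f \<beta> + m"
    and small: "\<forall>\<alpha>\<in>Poly_Mapping.keys p. wt f \<alpha> < j"
  shows "expcoeff A j p = 0"
proof -
  have "FL A ms p = 0" if "ms \<in> comps j" for ms
  proof -
    have "Poly_Mapping.keys (FL A ms p) = {}"
    proof (rule ccontr)
      assume "Poly_Mapping.keys (FL A ms p) \<noteq> {}"
      then obtain \<beta> where "\<beta> \<in> Poly_Mapping.keys (FL A ms p)" by blast
      then obtain \<alpha> where "\<alpha> \<in> Poly_Mapping.keys p" "wt f \<alpha> = wt f \<beta> + sum_list ms"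
        using FL_keys[OF h] by blast
      moreover have "sum_list ms = j" using that by (simp add: comps_def)
      ultimately show False using small by fastforce
    qed
    then show ?thesis by simp
  qed
  then show ?thesis unfolding expcoeff_FL by simp
qed

lemma expcoeff_eventually_zero:
  assumes h: "\<And>m p \<beta>. \<beta> \<in> Poly_Mapping.keys (A m p) \<Longrightarrow> \<exists>\<alpha>\<in>Poly_Mapping.keys p. wt f \<alpha> = wt f \<beta> + m"
  shows "\<exists>K. \<forall>j\<ge>K. expcoeff A j p = 0"
proof -
  let ?K = "Suc (\<Sum>\<alpha>\<in>Poly_Mapping.keys p. wt f \<alpha>)"
  have "\<forall>\<alpha>\<in>Poly_Mapping.keys p. wt f \<alpha> < ?K"
    using member_le_sum[of _ "Poly_Mapping.keys p" "wt f"] by (simp add: le_imp_less_Suc)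
  then have "\<forall>j\<ge>?K. expcoeff A j p = 0"
    by (auto intro!: expcoeff_vanish[OF h] elim: order.strict_trans2)
  then show ?thesis by blast
qed

definition fxw :: "var \<Rightarrow> nat" where "fxw v = (case v of Xv m \<Rightarrow> m | Yv m \<Rightarrow> 0)"
definition fyw :: "var \<Rightarrow> nat" where "fyw v = (case v of Xv m \<Rightarrow> 0 | Yv m \<Rightarrow> m)"

lemma Bop_keys: "\<beta> \<in> Poly_Mapping.keys (Bop m p) \<Longrightarrow> \<exists>\<alpha>\<in>Poly_Mapping.keys p. wt fxw \<alpha> = wt fxw \<beta> + m"
  unfolding Bop_def keys_minus
  by (drule keys_cpoly, drule keys_pd) (rule bexI[of _ "\<beta> + sg (Xv m) 1"], simp_all add: wt_add_single' fxw_def)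

lemma Dop_keys: "\<beta> \<in> Poly_Mapping.keys (Dop m p) \<Longrightarrow> \<exists>\<alpha>\<in>Poly_Mapping.keys p. wt fyw \<alpha> = wt fyw \<beta> + m"
  unfolding Dop_def keys_minus
  by (drule keys_cpoly, drule keys_pd) (rule bexI[of _ "\<beta> + sg (Yv m) 1"], simp_all add: wt_add_single' fyw_def)

lemma Bop_eventually_zero: "\<exists>K. \<forall>j\<ge>K. expcoeff Bop j p = 0"
  by (rule expcoeff_eventually_zero[OF Bop_keys])
lemma Dop_eventually_zero: "\<exists>K. \<forall>j\<ge>K. expcoeff Dop j p = 0"
  by (rule expcoeff_eventually_zero[OF Dop_keys])


abbreviation "vx k \<equiv> vmul (Xv k)"
abbreviation "vy k \<equiv> vmul (Yv k)"
abbreviation "dx k \<equiv> pd (Xv k)"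
abbreviation "dy k \<equiv> pd (Yv k)"

definition SS :: "(nat \<Rightarrow> op) \<Rightarrow> int \<Rightarrow> op" where
  "SS A i q = (if 0 \<le> i then expcoeff A (nat i) q else 0)"

lemma SS_neg: "i < 0 \<Longrightarrow> SS A i q = 0" by (simp add: SS_def)

lemma lin_SS: assumes "\<And>m. lin (A m)" shows "lin (SS A i)"
proof -
  have l: "lin (expcoeff A (nat i))" using lin_expcoeff[of A "nat i"] assms by blast
  show ?thesis unfolding lin_def SS_def by (auto simp: lin_add[OF l] lin_cpoly[OF l])
qed

lemma comps_0: "comps 0 = {[]}"
proof -
  have "ms = []" if "\<forall>m\<in>set ms. 1 \<le> m" "sum_list ms = 0" for ms :: "nat list"
    using length_le_sum_list[OF that(1)] that(2) by simp
  then show ?thesis by (auto simp: comps_def)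
qed

lemma SS_0: "SS A 0 q = q"
  by (simp add: SS_def expcoeff_FL comps_0 cpoly_one)

lemma SS_comm1:
  assumes linA: "\<And>m. lin (A m)" and linZ: "lin Z" and k: "1 \<le> k"
    and rel: "\<And>m q. A m (Z q) = Z (A m q) + (if m = k then cpoly \<kappa> * q else 0)"
  shows "SS A i (Z q) = Z (SS A i q) + cpoly \<kappa> * SS A (i - int k) q"
proof (cases "i < 0")
  case True then show ?thesis by (simp add: SS_neg lin_zero[OF linZ])
next
  case False
  define j where "j = nat i"
  have i: "i = int j" using False j_def by simp
  define c where "c m = (if m = k then \<kappa> else 0)" for m
  have rel': "\<And>m q. A m (Z q) = Z (A m q) + cpoly (c m) * q"
    by (simp add: rel c_def cpoly_zero)
  have "SS A i (Z q) = Z (expcoeff A j q) + (\<Sum>m\<in>{1..j}. cpoly (c m) * expcoeff A (j - m) q)"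
    unfolding i SS_def using expcoeff_comm[OF linA linZ rel'] by simp
  also have "(\<Sum>m\<in>{1..j}. cpoly (c m) * expcoeff A (j - m) q)
      = (\<Sum>m\<in>{1..j}. if m = k then cpoly \<kappa> * expcoeff A (j - m) q else 0)"
    by (rule sum.cong) (auto simp: c_def cpoly_zero)
  also have "\<dots> = (if k \<in> {1..j} then cpoly \<kappa> * expcoeff A (j - k) q else 0)"
    by (rule sum.delta) simp
  also have "\<dots> = cpoly \<kappa> * SS A (i - int k) q"
    using k by (auto simp: i SS_def nat_diff_distrib)
  finally show ?thesis unfolding i SS_def by simp
qed

lemma SS_commute:
  assumes linA: "\<And>m. lin (A m)" and linZ: "lin Z"
    and rel: "\<And>m q. A m (Z q) = Z (A m q)"
  shows "SS A i (Z q) = Z (SS A i q)"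
proof -
  have rel': "\<And>m q. A m (Z q) = Z (A m q) + (if m = 1 then cpoly 0 * q else 0)"
    using rel by (simp add: cpoly_zero)
  show ?thesis using SS_comm1[OF linA linZ order_refl rel', of i q] by (simp add: cpoly_zero)
qed

lemma SS_rec:
  assumes linA: "\<And>m. lin (A m)" and comm: "\<And>a b q. A a (A b q) = A b (A a q)"
    and K: "nat i \<le> K"
  shows "cpoly (of_int i) * SS A i q = (\<Sum>m\<in>{1..K}. cpoly (of_nat m) * A m (SS A (i - int m) q))"
proof (cases "i < 0")
  case True
  then show ?thesis by (simp add: SS_neg lin_zero[OF linA])
next
  case False
  define j where "j = nat i"
  have i: "i = int j" using False j_def by simp
  have "cpoly (of_int i) * SS A i q = (\<Sum>m\<in>{1..j}. cpoly (of_nat m) * A m (expcoeff A (j - m) q))"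
    unfolding i SS_def using expcoeff_rec[OF linA comm] by simp
  also have "\<dots> = (\<Sum>m\<in>{1..j}. cpoly (of_nat m) * A m (SS A (i - int m) q))"
    by (rule sum.cong) (auto simp: i SS_def nat_diff_distrib)
  also have "\<dots> = (\<Sum>m\<in>{1..K}. cpoly (of_nat m) * A m (SS A (i - int m) q))"
    by (rule sum.mono_neutral_left) (use K in \<open>auto simp: i SS_neg lin_zero[OF linA]\<close>)
  finally show ?thesis .
qed

lemma pd_cpoly_r: "pd v (p * cpoly c) = pd v p * cpoly c"
  using pd_cpoly[of v c p] by (simp add: mult.commute)
lemma vmul_cpoly_r: "vmul v (p * cpoly c) = vmul v p * cpoly c"
  using vmul_cpoly[of v c p] by (simp add: mult.commute)

lemmas pdv = pd_cpoly_r vmul_cpoly_r pd_vmul pd_diff pd_add pd_cpoly pd_uminus vmul_diff vmul_add vmul_cpoly vmul_uminus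

lemma RA_dx: "Aop m (dx k q) = dx k (Aop m q) + (if m = k then cpoly (-1) * q else 0)"
  by (cases "m = k") (simp_all add: Aop_def pdv pd_comm[of "Xv k"] cpoly_uminus cpoly_one)
lemma RA_vy: "Aop m (vy k q) = vy k (Aop m q) + (if m = k then cpoly (- (1 / of_nat k)) * q else 0)"
  by (cases "m = k") (simp_all add: Aop_def pdv vmul_comm[of "Yv k"] cpoly_uminus algebra_simps)
lemma RA_vx: "Aop m (vx k q) = vx k (Aop m q)"
  by (simp add: Aop_def pdv vmul_comm[of "Xv k"])
lemma RA_dy: "Aop m (dy k q) = dy k (Aop m q)"
  by (simp add: Aop_def pdv pd_comm[of "Yv k"])

lemma RB_vx: "Bop m (vx k q) = vx k (Bop m q) + (if m = k then cpoly (- (1 / of_nat k)) * q else 0)"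
  by (cases "m = k") (simp_all add: Bop_def pdv cpoly_uminus algebra_simps)
lemma RB_dx: "Bop m (dx k q) = dx k (Bop m q)"
  by (simp add: Bop_def pdv pd_comm[of "Xv k"])
lemma RB_vy: "Bop m (vy k q) = vy k (Bop m q)"
  by (simp add: Bop_def pdv)
lemma RB_dy: "Bop m (dy k q) = dy k (Bop m q)"
  by (simp add: Bop_def pdv pd_comm[of "Yv k"])

lemma RC_vx: "Cop m (vx k q) = vx k (Cop m q) + (if m = k then cpoly (- (1 / of_nat k)) * q else 0)"
  by (cases "m = k") (simp_all add: Cop_def pdv vmul_comm[of "Xv k"] cpoly_uminus algebra_simps)
lemma RC_dy: "Cop m (dy k q) = dy k (Cop m q) + (if m = k then cpoly (-1) * q else 0)"
  by (cases "m = k") (simp_all add: Cop_def pdv pd_comm[of "Yv k"] cpoly_uminus cpoly_one)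
lemma RC_vy: "Cop m (vy k q) = vy k (Cop m q)"
  by (simp add: Cop_def pdv vmul_comm[of "Yv k"])
lemma RC_dx: "Cop m (dx k q) = dx k (Cop m q)"
  by (simp add: Cop_def pdv pd_comm[of "Xv k"])

lemma RD_vy: "Dop m (vy k q) = vy k (Dop m q) + (if m = k then cpoly (- (1 / of_nat k)) * q else 0)"
  by (cases "m = k") (simp_all add: Dop_def pdv cpoly_uminus algebra_simps)
lemma RD_vx: "Dop m (vx k q) = vx k (Dop m q)"
  by (simp add: Dop_def pdv)
lemma RD_dx: "Dop m (dx k q) = dx k (Dop m q)"
  by (simp add: Dop_def pdv pd_comm[of "Xv k"])
lemma RD_dy: "Dop m (dy k q) = dy k (Dop m q)"
  by (simp add: Dop_def pdv pd_comm[of "Yv k"])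

lemma commA: "Aop a (Aop b q) = Aop b (Aop a q)"
  by (simp add: Aop_def pdv pd_comm vmul_comm algebra_simps)
lemma commB: "Bop a (Bop b q) = Bop b (Bop a q)"
  by (simp add: Bop_def pdv pd_comm algebra_simps)
lemma commC: "Cop a (Cop b q) = Cop b (Cop a q)"
  by (simp add: Cop_def pdv pd_comm vmul_comm algebra_simps)
lemma commD: "Dop a (Dop b q) = Dop b (Dop a q)"
  by (simp add: Dop_def pdv pd_comm algebra_simps)


lemma S_dx: "1 \<le> k \<Longrightarrow> SS Aop i (dx k q) = dx k (SS Aop i q) + cpoly (-1) * SS Aop (i - int k) q"
  by (rule SS_comm1[where A=Aop and Z="dx k", OF lin_Aop lin_pd _ RA_dx])
lemma S_vy: "1 \<le> k \<Longrightarrow> SS Aop i (vy k q) = vy k (SS Aop i q) + cpoly (- (1 / of_nat k)) * SS Aop (i - int k) q"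
  by (rule SS_comm1[where A=Aop and Z="vy k", OF lin_Aop lin_vmul _ RA_vy])
lemma S_vx: "SS Aop i (vx k q) = vx k (SS Aop i q)"
  by (rule SS_commute[where A=Aop and Z="vx k", OF lin_Aop lin_vmul RA_vx])
lemma S_dy: "SS Aop i (dy k q) = dy k (SS Aop i q)"
  by (rule SS_commute[where A=Aop and Z="dy k", OF lin_Aop lin_pd RA_dy])

lemma T_vx: "1 \<le> k \<Longrightarrow> SS Bop i (vx k q) = vx k (SS Bop i q) + cpoly (- (1 / of_nat k)) * SS Bop (i - int k) q"
  by (rule SS_comm1[where A=Bop and Z="vx k", OF lin_Bop lin_vmul _ RB_vx])
lemma T_dx: "SS Bop i (dx k q) = dx k (SS Bop i q)"
  by (rule SS_commute[where A=Bop and Z="dx k", OF lin_Bop lin_pd RB_dx])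
lemma T_vy: "SS Bop i (vy k q) = vy k (SS Bop i q)"
  by (rule SS_commute[where A=Bop and Z="vy k", OF lin_Bop lin_vmul RB_vy])
lemma T_dy: "SS Bop i (dy k q) = dy k (SS Bop i q)"
  by (rule SS_commute[where A=Bop and Z="dy k", OF lin_Bop lin_pd RB_dy])

lemma U_vx: "1 \<le> k \<Longrightarrow> SS Cop i (vx k q) = vx k (SS Cop i q) + cpoly (- (1 / of_nat k)) * SS Cop (i - int k) q"
  by (rule SS_comm1[where A=Cop and Z="vx k", OF lin_Cop lin_vmul _ RC_vx])
lemma U_dy: "1 \<le> k \<Longrightarrow> SS Cop i (dy k q) = dy k (SS Cop i q) + cpoly (-1) * SS Cop (i - int k) q"
  by (rule SS_comm1[where A=Cop and Z="dy k", OF lin_Cop lin_pd _ RC_dy])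
lemma U_vy: "SS Cop i (vy k q) = vy k (SS Cop i q)"
  by (rule SS_commute[where A=Cop and Z="vy k", OF lin_Cop lin_vmul RC_vy])
lemma U_dx: "SS Cop i (dx k q) = dx k (SS Cop i q)"
  by (rule SS_commute[where A=Cop and Z="dx k", OF lin_Cop lin_pd RC_dx])

lemma V_vy: "1 \<le> k \<Longrightarrow> SS Dop i (vy k q) = vy k (SS Dop i q) + cpoly (- (1 / of_nat k)) * SS Dop (i - int k) q"
  by (rule SS_comm1[where A=Dop and Z="vy k", OF lin_Dop lin_vmul _ RD_vy])
lemma V_vx: "SS Dop i (vx k q) = vx k (SS Dop i q)"
  by (rule SS_commute[where A=Dop and Z="vx k", OF lin_Dop lin_vmul RD_vx])
lemma V_dx: "SS Dop i (dx k q) = dx k (SS Dop i q)"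
  by (rule SS_commute[where A=Dop and Z="dx k", OF lin_Dop lin_pd RD_dx])
lemma V_dy: "SS Dop i (dy k q) = dy k (SS Dop i q)"
  by (rule SS_commute[where A=Dop and Z="dy k", OF lin_Dop lin_pd RD_dy])

lemma lin_S: "lin (SS Aop i)" by (rule lin_SS[OF lin_Aop])
lemma lin_T: "lin (SS Bop i)" by (rule lin_SS[OF lin_Bop])
lemma lin_U: "lin (SS Cop i)" by (rule lin_SS[OF lin_Cop])
lemma lin_V: "lin (SS Dop i)" by (rule lin_SS[OF lin_Dop])

lemmas linS = lin_add[OF lin_S] lin_diff[OF lin_S] lin_cpoly[OF lin_S] lin_uminus[OF lin_S] lin_zero[OF lin_S]
lemmas linT = lin_add[OF lin_T] lin_diff[OF lin_T] lin_cpoly[OF lin_T] lin_uminus[OF lin_T] lin_zero[OF lin_T]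
lemmas linU = lin_add[OF lin_U] lin_diff[OF lin_U] lin_cpoly[OF lin_U] lin_uminus[OF lin_U] lin_zero[OF lin_U]
lemmas linV = lin_add[OF lin_V] lin_diff[OF lin_V] lin_cpoly[OF lin_V] lin_uminus[OF lin_V] lin_zero[OF lin_V]

lemma S_rec: "nat i \<le> K \<Longrightarrow> cpoly (of_int i) * SS Aop i q = (\<Sum>m\<in>{1..K}. cpoly (of_nat m) * Aop m (SS Aop (i - int m) q))"
  by (rule SS_rec[OF lin_Aop commA])
lemma U_rec: "nat i \<le> K \<Longrightarrow> cpoly (of_int i) * SS Cop i q = (\<Sum>m\<in>{1..K}. cpoly (of_nat m) * Cop m (SS Cop (i - int m) q))"
  by (rule SS_rec[OF lin_Cop commC])

lemma cpoly_inv_cancel: "1 \<le> m \<Longrightarrow> cpoly (of_nat m) * (cpoly (1 / of_nat m) * X) = X"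
  by (simp add: cpoly_mult_mult cpoly_one)

lemma T_rec: "nat i \<le> K \<Longrightarrow> cpoly (of_int i) * SS Bop i q = - (\<Sum>m\<in>{1..K}. dx m (SS Bop (i - int m) q))"
  unfolding SS_rec[OF lin_Bop commB] sum_negf[symmetric]
  by (rule sum.cong[OF refl]) (simp add: Bop_def cpoly_inv_cancel)
lemma V_rec: "nat i \<le> K \<Longrightarrow> cpoly (of_int i) * SS Dop i q = - (\<Sum>m\<in>{1..K}. dy m (SS Dop (i - int m) q))"
  unfolding SS_rec[OF lin_Dop commD] sum_negf[symmetric]
  by (rule sum.cong[OF refl]) (simp add: Dop_def cpoly_inv_cancel)


definition vars :: "poly \<Rightarrow> var set" where
  "vars q = \<Union> (Poly_Mapping.keys ` Poly_Mapping.keys q)"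

lemma finite_vars: "finite (vars q)"
  unfolding vars_def by (rule finite_Union) auto

lemma pd_nz_var: assumes "pd v q \<noteq> 0" shows "v \<in> vars q"
proof -
  obtain \<beta> where b: "lk (pd v q) \<beta> \<noteq> 0"
    using assms by (metis poly_mapping_eqI lookup_zero)
  then have "lk q (\<beta> + sg v 1) \<noteq> 0" by (simp add: lookup_pd)
  then have k: "\<beta> + sg v 1 \<in> Poly_Mapping.keys q" by (simp add: in_keys_iff)
  have "v \<in> Poly_Mapping.keys (\<beta> + sg v 1)" by (simp add: in_keys_iff lookup_add)
  then show ?thesis using k unfolding vars_def by blast
qed

definition Gt :: "nat \<Rightarrow> op" where
  "Gt m p = (if 1 \<le> m then cpoly (of_nat (m + 2)) * vmul (Xv (m + 2)) (pd (Xv m) p)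
          - cpoly (of_nat m) * vmul (Yv m) (pd (Yv (m + 2)) p) else 0)"

lemma Lplus_Gt: "Lplus c p = cpoly (1/2) * vx 1 (vx 1 p) + fsum (\<lambda>m. Gt m p) - vx 1 (dy 1 p) - cpoly c * dy 2 p"
  unfolding Lplus_def Gt_def ..

lemma Gt_supp: "finite {m. Gt m p \<noteq> 0}"
proof -
  have "{m. Gt m p \<noteq> 0} \<subseteq> Xv -` vars p \<union> (\<lambda>m. Yv (m + 2)) -` vars p"
  proof
    fix m assume "m \<in> {m. Gt m p \<noteq> 0}"
    then have "pd (Xv m) p \<noteq> 0 \<or> pd (Yv (m + 2)) p \<noteq> 0"
      by (auto simp: Gt_def vmul_zero split: if_splits)
    then show "m \<in> Xv -` vars p \<union> (\<lambda>m. Yv (m + 2)) -` vars p"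
      using pd_nz_var by blast
  qed
  moreover have "finite (Xv -` vars p)"
    by (rule finite_vimageI[OF finite_vars]) (simp add: inj_def)
  moreover have "finite ((\<lambda>m. Yv (m + 2)) -` vars p)"
    by (rule finite_vimageI[OF finite_vars]) (simp add: inj_def)
  ultimately show ?thesis by (meson finite_UnI finite_subset)
qed

lemma lin_Gt: "lin (Gt m)"
  unfolding lin_def Gt_def by (simp add: pdv algebra_simps)

lemma fsum_eq: assumes "finite S" "\<And>k. k \<notin> S \<Longrightarrow> f k = 0" shows "fsum f = sum f S"
proof -
  have "{j. f j \<noteq> 0} \<subseteq> S" using assms(2) by blast
  then show ?thesis unfolding fsum_def
    by (rule sum.mono_neutral_left[OF assms(1)]) auto
qed

lemma fsum_lin_diff:
  assumes linP: "lin \<Phi>" and fin: "\<And>q. finite {m. G m q \<noteq> 0}"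
  shows "\<Phi> (fsum (\<lambda>m. G m q)) - fsum (\<lambda>m. G m (\<Phi> q)) = fsum (\<lambda>m. \<Phi> (G m q) - G m (\<Phi> q))"
proof -
  define S where "S = {m. G m q \<noteq> 0} \<union> {m. G m (\<Phi> q) \<noteq> 0}"
  have fS: "finite S" using fin by (simp add: S_def)
  have e1: "fsum (\<lambda>m. G m q) = sum (\<lambda>m. G m q) S" by (rule fsum_eq[OF fS]) (auto simp: S_def)
  have e2: "fsum (\<lambda>m. G m (\<Phi> q)) = sum (\<lambda>m. G m (\<Phi> q)) S" by (rule fsum_eq[OF fS]) (auto simp: S_def)
  have e3: "fsum (\<lambda>m. \<Phi> (G m q) - G m (\<Phi> q)) = sum (\<lambda>m. \<Phi> (G m q) - G m (\<Phi> q)) S"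
    by (rule fsum_eq[OF fS]) (auto simp: S_def lin_zero[OF linP])
  show ?thesis unfolding e1 e2 e3 lin_sum[OF linP] sum_subtractf ..
qed

lemma lin_fsumG:
  assumes linG: "\<And>m. lin (G m)" and fin: "\<And>q. finite {m. G m q \<noteq> 0}"
  shows "lin (\<lambda>q. fsum (\<lambda>m. G m q))"
  unfolding lin_def
proof (intro allI conjI)
  fix p q
  define S where "S = {m. G m p \<noteq> 0} \<union> {m. G m q \<noteq> 0}"
  have fS: "finite S" using fin by (simp add: S_def)
  have e1: "fsum (\<lambda>m. G m p) = sum (\<lambda>m. G m p) S" by (rule fsum_eq[OF fS]) (auto simp: S_def)
  have e2: "fsum (\<lambda>m. G m q) = sum (\<lambda>m. G m q) S" by (rule fsum_eq[OF fS]) (auto simp: S_def)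
  have e3: "fsum (\<lambda>m. G m (p + q)) = sum (\<lambda>m. G m (p + q)) S"
    by (rule fsum_eq[OF fS]) (auto simp: S_def lin_add[OF linG])
  have "sum (\<lambda>m. G m (p + q)) S = sum (\<lambda>m. G m p) S + sum (\<lambda>m. G m q) S"
    by (simp only: lin_add[OF linG] sum.distrib)
  then show "fsum (\<lambda>m. G m (p + q)) = fsum (\<lambda>m. G m p) + fsum (\<lambda>m. G m q)"
    using e1 e2 e3 by simp
next
  fix c p
  define S where "S = {m. G m p \<noteq> 0}"
  have fS: "finite S" using fin by (simp add: S_def)
  have e1: "fsum (\<lambda>m. G m p) = sum (\<lambda>m. G m p) S" by (rule fsum_eq[OF fS]) (auto simp: S_def)
  have e3: "fsum (\<lambda>m. G m (cpoly c * p)) = sum (\<lambda>m. G m (cpoly c * p)) S"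
    by (rule fsum_eq[OF fS]) (auto simp: S_def lin_cpoly[OF linG])
  have "sum (\<lambda>m. G m (cpoly c * p)) S = cpoly c * sum (\<lambda>m. G m p) S"
    by (simp only: lin_cpoly[OF linG] sum_distrib_left)
  then show "fsum (\<lambda>m. G m (cpoly c * p)) = cpoly c * fsum (\<lambda>m. G m p)"
    using e1 e3 by simp
qed

lemma lin_LF: "lin (\<lambda>q. fsum (\<lambda>m. Gt m q))"
  by (rule lin_fsumG[OF lin_Gt Gt_supp])

lemma lin_Lplus: "lin (Lplus c)"
proof -
  have "Lplus c = (\<lambda>p. cpoly (1/2) * vx 1 (vx 1 p) + fsum (\<lambda>m. Gt m p) - vx 1 (dy 1 p) - cpoly c * dy 2 p)"
    by (rule ext) (rule Lplus_Gt)
  moreover have "lin (\<lambda>p. cpoly (1/2) * vx 1 (vx 1 p) + fsum (\<lambda>m. Gt m p) - vx 1 (dy 1 p) - cpoly c * dy 2 p)"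
  proof -
    have a: "\<And>p q. fsum (\<lambda>m. Gt m (p + q)) = fsum (\<lambda>m. Gt m p) + fsum (\<lambda>m. Gt m q)"
      using lin_add[OF lin_LF] by simp
    have b: "\<And>c p. fsum (\<lambda>m. Gt m (cpoly c * p)) = cpoly c * fsum (\<lambda>m. Gt m p)"
      using lin_cpoly[OF lin_LF] by simp
    show ?thesis unfolding lin_def
      by (simp only: a b pd_add vmul_add pd_cpoly vmul_cpoly) (simp add: algebra_simps)
  qed
  ultimately show ?thesis by simp
qed

lemma comm_Lplus:
  assumes linP: "lin \<Phi>"
  shows "\<Phi> (Lplus c q) - Lplus c (\<Phi> q) =
      cpoly (1/2) * (\<Phi> (vx 1 (vx 1 q)) - vx 1 (vx 1 (\<Phi> q)))
    + fsum (\<lambda>m. \<Phi> (Gt m q) - Gt m (\<Phi> q))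
    - (\<Phi> (vx 1 (dy 1 q)) - vx 1 (dy 1 (\<Phi> q)))
    - cpoly c * (\<Phi> (dy 2 q) - dy 2 (\<Phi> q))"
proof -
  have "\<Phi> (Lplus c q) = cpoly (1/2) * \<Phi> (vx 1 (vx 1 q)) + \<Phi> (fsum (\<lambda>m. Gt m q)) - \<Phi> (vx 1 (dy 1 q)) - cpoly c * \<Phi> (dy 2 q)"
    unfolding Lplus_Gt by (simp add: lin_add[OF linP] lin_diff[OF linP] lin_cpoly[OF linP])
  moreover have "\<Phi> (fsum (\<lambda>m. Gt m q)) = fsum (\<lambda>m. Gt m (\<Phi> q)) + fsum (\<lambda>m. \<Phi> (Gt m q) - Gt m (\<Phi> q))"
    using fsum_lin_diff[OF linP Gt_supp, where q=q] by (simp add: algebra_simps)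
  ultimately show ?thesis unfolding Lplus_Gt[of c "\<Phi> q"] by (simp add: algebra_simps)
qed


lemma lin_cpoly_r: "lin f \<Longrightarrow> f (p * cpoly c) = f p * cpoly c"
  using lin_cpoly[of f c p] by (simp add: mult.commute)

lemmas linS' = linS lin_cpoly_r[OF lin_S]
lemmas linT' = linT lin_cpoly_r[OF lin_T]

lemma cpoly_mult: "cpoly (a * b) = cpoly a * cpoly b"
  by (simp add: cpoly_def mult_single)
lemma cpoly_numeral: "cpoly (numeral n) = numeral n"
  by (simp add: cpoly_def)
lemma cpoly_of_int: "cpoly (of_int n) = of_int n"
  by (simp add: cpoly_def)
lemmas cpoly_hom = cpoly_add cpoly_diff cpoly_uminus cpoly_one cpoly_zero cpoly_mult cpoly_numeral cpoly_of_nat cpoly_of_int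

lemma P1_x1x1: "SS Aop i (SS Bop j (vx 1 (vx 1 q))) - vx 1 (vx 1 (SS Aop i (SS Bop j q)))
   = cpoly (-2) * vx 1 (SS Aop i (SS Bop (j - 1) q)) + SS Aop i (SS Bop (j - 2) q)"
  by (simp add: T_vx S_vx linS' linT' pdv cpoly_mult_mult) (simp add: cpoly_hom algebra_simps)

lemma P1_x1y1: "SS Aop i (SS Bop j (vx 1 (dy 1 q))) - vx 1 (dy 1 (SS Aop i (SS Bop j q)))
   = - dy 1 (SS Aop i (SS Bop (j - 1) q))"
  by (simp add: T_vx T_dy S_vx S_dy linS' linT' pdv cpoly_mult_mult) (simp add: cpoly_hom algebra_simps)

lemma P1_y2: "SS Aop i (SS Bop j (dy 2 q)) - dy 2 (SS Aop i (SS Bop j q)) = 0"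
  by (simp add: T_dy S_dy)

lemma nz2: "(of_nat m + 2 :: complex) \<noteq> 0"
proof -
  have "(of_nat m + 2 :: complex) = of_nat (m + 2)" by simp
  also have "\<dots> \<noteq> 0" by (simp only: of_nat_eq_0_iff)
  finally show ?thesis .
qed

lemma P1_Gt: assumes m: "1 \<le> m"
  shows "SS Aop i (SS Bop j (Gt m q)) - Gt m (SS Aop i (SS Bop j q))
   = - (cpoly (of_nat (m + 2)) * Aop (m + 2) (SS Aop (i - int m) (SS Bop j q)))
     - SS Aop i (dx m (SS Bop (j - 2 - int m) q))"
proof -
  have m0: "(of_nat m :: complex) \<noteq> 0" using m by simp
  show ?thesis
    using m by (simp add: Gt_def T_vx T_dx T_vy T_dy S_vx S_dx S_vy S_dy linS' linT' pdv cpoly_mult_mult Aop_def nz2 m0 distrib_left right_diff_distrib)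
       (simp add: cpoly_hom algebra_simps nz2)
qed

lemma sum_shift2: "(\<Sum>m\<in>{1..K+2}. f m) = f 1 + f 2 + (\<Sum>m\<in>{1..K}. f (m + 2)) " for f :: "nat \<Rightarrow> 'a::comm_monoid_add"
proof (induction K)
  case 0 then show ?case by (simp add: numeral_2_eq_2)
next
  case (Suc K)
  have "(\<Sum>m\<in>{1..Suc K + 2}. f m) = (\<Sum>m\<in>{1..K+2}. f m) + f (Suc K + 2)"
    by (simp add: sum.cl_ivl_Suc)
  also have "\<dots> = f 1 + f 2 + ((\<Sum>m\<in>{1..K}. f (m + 2)) + f (Suc K + 2))"
    using Suc by (simp add: add.assoc)
  also have "(\<Sum>m\<in>{1..K}. f (m + 2)) + f (Suc K + 2) = (\<Sum>m\<in>{1..Suc K}. f (m + 2))"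
    by (simp add: sum.cl_ivl_Suc)
  finally show ?case .
qed

lemma S_rec_shift:
  assumes K: "nat i \<le> K"
  shows "(\<Sum>m\<in>{1..K}. cpoly (of_nat (m + 2)) * Aop (m + 2) (SS Aop (i - int m) r))
     = cpoly (of_int i + 2) * SS Aop (i + 2) r - Aop 1 (SS Aop (i + 1) r) - cpoly 2 * Aop 2 (SS Aop i r)"
proof -
  have K2: "nat (i + 2) \<le> K + 2" using K by simp
  have "cpoly (of_int (i + 2)) * SS Aop (i + 2) r = (\<Sum>m\<in>{1..K+2}. cpoly (of_nat m) * Aop m (SS Aop (i + 2 - int m) r))"
    by (rule S_rec[OF K2])
  also have "\<dots> = cpoly (of_nat 1) * Aop 1 (SS Aop (i + 2 - int 1) r) + cpoly (of_nat 2) * Aop 2 (SS Aop (i + 2 - int 2) r)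
       + (\<Sum>m\<in>{1..K}. cpoly (of_nat (m + 2)) * Aop (m + 2) (SS Aop (i + 2 - int (m + 2)) r))"
    by (rule sum_shift2)
  also have "\<dots> = Aop 1 (SS Aop (i + 1) r) + cpoly 2 * Aop 2 (SS Aop i r)
       + (\<Sum>m\<in>{1..K}. cpoly (of_nat (m + 2)) * Aop (m + 2) (SS Aop (i - int m) r))"
    by (simp add: cpoly_one algebra_simps)
  finally show ?thesis by (simp add: algebra_simps)
qed

lemma P1_fsum:
  "fsum (\<lambda>m. SS Aop i (SS Bop j (Gt m q)) - Gt m (SS Aop i (SS Bop j q)))
   = cpoly (of_int j - 2) * SS Aop i (SS Bop (j - 2) q)
     - cpoly (of_int i + 2) * SS Aop (i + 2) (SS Bop j q)
     + Aop 1 (SS Aop (i + 1) (SS Bop j q)) + cpoly 2 * Aop 2 (SS Aop i (SS Bop j q))"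
proof -
  define K where "K = nat i + nat j"
  define D where "D m = - (cpoly (of_nat (m + 2)) * Aop (m + 2) (SS Aop (i - int m) (SS Bop j q)))
     - SS Aop i (dx m (SS Bop (j - 2 - int m) q))" for m
  have "fsum (\<lambda>m. SS Aop i (SS Bop j (Gt m q)) - Gt m (SS Aop i (SS Bop j q))) = (\<Sum>m\<in>{1..K}. SS Aop i (SS Bop j (Gt m q)) - Gt m (SS Aop i (SS Bop j q)))"
  proof (rule fsum_eq)
    fix m assume "m \<notin> {1..K}"
    then consider "m = 0" | "m > K" by fastforce
    then show "SS Aop i (SS Bop j (Gt m q)) - Gt m (SS Aop i (SS Bop j q)) = 0"
    proof cases
      case 1 then show ?thesis by (simp add: Gt_def linS linT)
    next
      case 2
      then have "i - int m < 0" "j - 2 - int m < 0" by (auto simp: K_def)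
      then have "D m = 0" by (simp add: D_def SS_neg lin_zero[OF lin_Aop] pd_zero linS)
      then show ?thesis using 2 P1_Gt[of m i j q] by (simp add: D_def)
    qed
  qed simp
  also have "\<dots> = (\<Sum>m\<in>{1..K}. D m)"
    by (rule sum.cong[OF refl]) (simp add: P1_Gt D_def)
  also have "\<dots> = - (\<Sum>m\<in>{1..K}. cpoly (of_nat (m + 2)) * Aop (m + 2) (SS Aop (i - int m) (SS Bop j q)))
     - SS Aop i (\<Sum>m\<in>{1..K}. dx m (SS Bop (j - 2 - int m) q))"
    unfolding D_def sum_subtractf sum_negf lin_sum[OF lin_S] ..
  also have "(\<Sum>m\<in>{1..K}. dx m (SS Bop (j - 2 - int m) q)) = - (cpoly (of_int (j - 2)) * SS Bop (j - 2) q)"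
    using T_rec[of "j - 2" K q] by (simp add: K_def)
  also have "(\<Sum>m\<in>{1..K}. cpoly (of_nat (m + 2)) * Aop (m + 2) (SS Aop (i - int m) (SS Bop j q)))
     = cpoly (of_int i + 2) * SS Aop (i + 2) (SS Bop j q) - Aop 1 (SS Aop (i + 1) (SS Bop j q)) - cpoly 2 * Aop 2 (SS Aop i (SS Bop j q))"
    by (rule S_rec_shift) (simp add: K_def)
  finally show ?thesis by (simp add: linS algebra_simps)
qed

lemma Aop1: "Aop (Suc 0) r = vx (Suc 0) r - dy (Suc 0) r"
  by (simp add: Aop_def cpoly_one)

lemma P1_term:
  "SS Aop i (SS Bop j (Lplus c q)) - Lplus c (SS Aop i (SS Bop j q))
   = - Aop 1 (SS Aop i (SS Bop (j - 1) q)) + cpoly (of_int j - 3/2) * SS Aop i (SS Bop (j - 2) q)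
     - cpoly (of_int i + 2) * SS Aop (i + 2) (SS Bop j q)
     + Aop 1 (SS Aop (i + 1) (SS Bop j q)) + cpoly 2 * Aop 2 (SS Aop i (SS Bop j q))"
proof -
  have linP: "lin (\<lambda>r. SS Aop i (SS Bop j r))" by (rule lin_comp[OF lin_S lin_T])
  let ?X = "SS Aop i (SS Bop (j - 1) q)" and ?Y = "SS Aop i (SS Bop (j - 2) q)"
  have e1: "SS Aop i (SS Bop j (Lplus c q)) - Lplus c (SS Aop i (SS Bop j q))
     = cpoly (1/2) * (cpoly (-2) * vx 1 ?X + ?Y)
       + (cpoly (of_int j - 2) * ?Y
     - cpoly (of_int i + 2) * SS Aop (i + 2) (SS Bop j q)
     + Aop 1 (SS Aop (i + 1) (SS Bop j q)) + cpoly 2 * Aop 2 (SS Aop i (SS Bop j q)))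
       - (- dy 1 ?X) - cpoly c * 0"
    unfolding comm_Lplus[OF linP] P1_x1x1 P1_fsum P1_x1y1 P1_y2 ..
  have e2: "cpoly (1/2) * (cpoly (-2) * vx 1 ?X + ?Y) = - vx 1 ?X + cpoly (1/2) * ?Y"
    by (simp only: distrib_left cpoly_mult_mult) (simp add: cpoly_uminus cpoly_one)
  have e3: "cpoly (of_int j - 3/2) = cpoly (1/2) + cpoly (of_int j - 2)"
    unfolding cpoly_add[symmetric] by (rule arg_cong[where f = cpoly]) simp
  show ?thesis unfolding e1 e2 e3 by (simp add: Aop1 algebra_simps)
qed


lemma tele1: "(\<Sum>j<J. f (int j) - f (int j - 1)) = f (int J - 1) - f (-1)" for f :: "int \<Rightarrow> 'a::ab_group_add"
  by (induction J) (simp_all add: algebra_simps)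
lemma tele2: "(\<Sum>j<J. f (int j - 2) - f (int j)) = f (-2) + f (-1) - f (int J - 2) - f (int J - 1)" for f :: "int \<Rightarrow> 'a::ab_group_add"
  by (induction J) (simp_all add: algebra_simps)
lemma tele3: "(\<Sum>j<J. f (int j) - f (int j + 1)) = f 0 - f (int J)" for f :: "int \<Rightarrow> 'a::ab_group_add"
  by (induction J) (simp_all add: algebra_simps)
lemma tele4: "(\<Sum>j<J. f (int j) - f (int j + 2)) = f 0 + f 1 - f (int J) - f (int J + 1)" for f :: "int \<Rightarrow> 'a::ab_group_add"
  by (induction J) (simp_all add: algebra_simps)

lemma Xop_SS: "Xop n r = fsum (\<lambda>j. SS Aop (n + int j) (SS Bop (int j) r))"
  unfolding Xop_def SS_def by (rule arg_cong[where f = fsum]) (rule ext, simp)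
lemma Yop_SS: "Yop n r = fsum (\<lambda>j. SS Cop (n + int j) (SS Dop (int j) r))"
  unfolding Yop_def SS_def by (rule arg_cong[where f = fsum]) (rule ext, simp)

lemma Xop_sum: assumes "\<And>j. j \<ge> J \<Longrightarrow> SS Bop (int j) r = 0"
  shows "Xop n r = (\<Sum>j<J. SS Aop (n + int j) (SS Bop (int j) r))"
  unfolding Xop_SS by (rule fsum_eq) (auto simp: assms linS)
lemma Yop_sum: assumes "\<And>j. j \<ge> J \<Longrightarrow> SS Dop (int j) r = 0"
  shows "Yop n r = (\<Sum>j<J. SS Cop (n + int j) (SS Dop (int j) r))"
  unfolding Yop_SS by (rule fsum_eq) (auto simp: assms linU)

lemma T_bound: "\<exists>K. \<forall>j. int K \<le> j \<longrightarrow> SS Bop j r = 0"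
proof -
  obtain K where K: "\<forall>j\<ge>K. expcoeff Bop j r = 0" using Bop_eventually_zero by blast
  have "SS Bop j r = 0" if "int K \<le> j" for j
    using K that by (auto simp: SS_def)
  then show ?thesis by blast
qed
lemma V_bound: "\<exists>K. \<forall>j. int K \<le> j \<longrightarrow> SS Dop j r = 0"
proof -
  obtain K where K: "\<forall>j\<ge>K. expcoeff Dop j r = 0" using Dop_eventually_zero by blast
  have "SS Dop j r = 0" if "int K \<le> j" for j
    using K that by (auto simp: SS_def)
  then show ?thesis by blast
qed

lemma Aop2: "cpoly 2 * Aop 2 r = cpoly 2 * vx 2 r - dy 2 r"
  by (simp add: Aop_def right_diff_distrib cpoly_mult_mult cpoly_one)

lemma part1: "Xop n (Lplus c p) - Lplus c (Xop n p)
   = - (cpoly (of_int n + 3/2) * Xop (n + 2) p) + (cpoly 2 * vmul (Xv 2) (Xop n p) - pd (Yv 2) (Xop n p))"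
proof -
  obtain K1 where K1: "\<And>j. int K1 \<le> j \<Longrightarrow> SS Bop j p = 0" using T_bound by blast
  obtain K2 where K2: "\<And>j. int K2 \<le> j \<Longrightarrow> SS Bop j (Lplus c p) = 0" using T_bound by blast
  define J where "J = K1 + K2 + 2"
  have b1: "\<And>j. j \<ge> J \<Longrightarrow> SS Bop (int j) p = 0" using K1 by (simp add: J_def)
  have b2: "\<And>j. j \<ge> J \<Longrightarrow> SS Bop (int j) (Lplus c p) = 0" using K2 by (simp add: J_def)
  define F where "F j = Aop 1 (SS Aop (n + j + 1) (SS Bop j p))" for j
  define G where "G j = cpoly (of_int j + 1/2) * SS Aop (n + j + 2) (SS Bop j p)" for j
  define W where "W j = SS Aop (n + j + 2) (SS Bop j p)" for j
  define Z where "Z j = SS Aop (n + j) (SS Bop j p)" for j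
  have per: "SS Aop (n + int j) (SS Bop (int j) (Lplus c p)) - Lplus c (SS Aop (n + int j) (SS Bop (int j) p))
     = (F (int j) - F (int j - 1)) + (G (int j - 2) - G (int j)) - cpoly (of_int n + 3/2) * W (int j)
       + cpoly 2 * Aop 2 (Z (int j))" for j
  proof -
    have c1: "cpoly (of_int (n + int j) + 2) = cpoly (of_int n + 3/2) + cpoly (of_int (int j) + 1/2)"
      unfolding cpoly_add[symmetric] by (rule arg_cong[where f = cpoly]) simp
    have c2: "cpoly (of_int (int j) - 3/2) = cpoly (of_int (int j - 2) + 1/2)"
      by (rule arg_cong[where f = cpoly]) simp
    have i1: "n + int j + 1 = n + (int j - 1) + 1 + 1" by simp
    show ?thesis
      unfolding P1_term c1 c2 F_def G_def W_def Z_def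
      by (simp add: algebra_simps)
  qed
  have "Xop n (Lplus c p) - Lplus c (Xop n p)
      = (\<Sum>j<J. SS Aop (n + int j) (SS Bop (int j) (Lplus c p)) - Lplus c (SS Aop (n + int j) (SS Bop (int j) p)))"
  proof -
    have x1: "Xop n (Lplus c p) = (\<Sum>j<J. SS Aop (n + int j) (SS Bop (int j) (Lplus c p)))"
      by (rule Xop_sum[OF b2])
    have x2: "Xop n p = (\<Sum>j<J. SS Aop (n + int j) (SS Bop (int j) p))"
      by (rule Xop_sum[OF b1])
    show ?thesis unfolding x1 x2 lin_sum[OF lin_Lplus] sum_subtractf ..
  qed
  also have "\<dots> = (\<Sum>j<J. F (int j) - F (int j - 1)) + (\<Sum>j<J. G (int j - 2) - G (int j))
      - cpoly (of_int n + 3/2) * (\<Sum>j<J. W (int j)) + cpoly 2 * Aop 2 (\<Sum>j<J. Z (int j))"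
    unfolding per sum.distrib sum_subtractf sum_distrib_left lin_sum[OF lin_Aop] ..
  also have "(\<Sum>j<J. F (int j) - F (int j - 1)) = 0"
    unfolding tele1 unfolding F_def by (simp add: J_def SS_neg linS lin_zero[OF lin_Aop] K1)
  also have "(\<Sum>j<J. G (int j - 2) - G (int j)) = 0"
  proof -
    have "SS Bop (int J - 2) p = 0" "SS Bop (int J - 1) p = 0" using K1 by (simp_all add: J_def)
    then show ?thesis unfolding tele2 unfolding G_def by (simp add: SS_neg linS)
  qed
  also have "(\<Sum>j<J. W (int j)) = Xop (n + 2) p"
  proof -
    have "Xop (n + 2) p = (\<Sum>j<J. SS Aop (n + 2 + int j) (SS Bop (int j) p))" by (rule Xop_sum[OF b1])
    then show ?thesis unfolding W_def by (simp add: algebra_simps)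
  qed
  also have "(\<Sum>j<J. Z (int j)) = Xop n p"
    unfolding Z_def by (rule Xop_sum[OF b1, symmetric])
  finally show ?thesis by (simp add: Aop2 algebra_simps)
qed



lemmas linU' = linU lin_cpoly_r[OF lin_U]
lemmas linV' = linV lin_cpoly_r[OF lin_V]

lemma part3: "Xop n (vmul (Xv 2) p) - vmul (Xv 2) (Xop n p) = - (cpoly (1/2) * Xop (n + 2) p)"
proof -
  obtain K1 where K1: "\<And>j. int K1 \<le> j \<Longrightarrow> SS Bop j p = 0" using T_bound by blast
  obtain K2 where K2: "\<And>j. int K2 \<le> j \<Longrightarrow> SS Bop j (vx 2 p) = 0" using T_bound by blast
  define J where "J = K1 + K2 + 2"
  have b1: "\<And>j. j \<ge> J \<Longrightarrow> SS Bop (int j) p = 0" using K1 by (simp add: J_def)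
  have b2: "\<And>j. j \<ge> J \<Longrightarrow> SS Bop (int j) (vx 2 p) = 0" using K2 by (simp add: J_def)
  define g where "g j = SS Aop (n + j + 2) (SS Bop j p)" for j
  have per: "SS Aop (n + int j) (SS Bop (int j) (vx 2 p)) - vx 2 (SS Aop (n + int j) (SS Bop (int j) p))
      = - (cpoly (1/2) * g (int j - 2))" for j
    unfolding g_def by (simp add: T_vx S_vx linS' cpoly_uminus algebra_simps)
  have x1: "Xop n (vx 2 p) = (\<Sum>j<J. SS Aop (n + int j) (SS Bop (int j) (vx 2 p)))" by (rule Xop_sum[OF b2])
  have x2: "Xop n p = (\<Sum>j<J. SS Aop (n + int j) (SS Bop (int j) p))" by (rule Xop_sum[OF b1])
  have x3: "Xop (n + 2) p = (\<Sum>j<J. g (int j))"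
  proof -
    have "Xop (n + 2) p = (\<Sum>j<J. SS Aop (n + 2 + int j) (SS Bop (int j) p))" by (rule Xop_sum[OF b1])
    then show ?thesis unfolding g_def by (simp add: algebra_simps)
  qed
  have t: "(\<Sum>j<J. g (int j - 2)) = (\<Sum>j<J. g (int j))"
  proof -
    have "SS Bop (int J - 2) p = 0" "SS Bop (int J - 1) p = 0" using K1 by (simp_all add: J_def)
    then have "(\<Sum>j<J. g (int j - 2) - g (int j)) = 0" unfolding tele2 unfolding g_def by (simp add: SS_neg linS)
    then show ?thesis by (simp add: sum_subtractf)
  qed
  show ?thesis
    unfolding x1 x2 x3 lin_sum[OF lin_vmul] sum_subtractf[symmetric] per sum_negf sum_distrib_left[symmetric] t ..
qed

lemma part4: "Yop n (vmul (Xv 2) p) - vmul (Xv 2) (Yop n p) = - (cpoly (1/2) * Yop (n - 2) p)"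
proof -
  obtain K1 where K1: "\<And>j. int K1 \<le> j \<Longrightarrow> SS Dop j p = 0" using V_bound by blast
  define J where "J = K1"
  have b1: "\<And>j. j \<ge> J \<Longrightarrow> SS Dop (int j) p = 0" using K1 by (simp add: J_def)
  have b2: "\<And>j. j \<ge> J \<Longrightarrow> SS Dop (int j) (vx 2 p) = 0" using K1 by (simp add: J_def V_vx pd_zero vmul_zero)
  have per: "SS Cop (n + int j) (SS Dop (int j) (vx 2 p)) - vx 2 (SS Cop (n + int j) (SS Dop (int j) p))
      = - (cpoly (1/2) * SS Cop (n - 2 + int j) (SS Dop (int j) p))" for j
    by (simp add: V_vx U_vx linU' cpoly_uminus algebra_simps)
  have x1: "Yop n (vx 2 p) = (\<Sum>j<J. SS Cop (n + int j) (SS Dop (int j) (vx 2 p)))" by (rule Yop_sum[OF b2])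
  have x2: "Yop n p = (\<Sum>j<J. SS Cop (n + int j) (SS Dop (int j) p))" by (rule Yop_sum[OF b1])
  have x3: "Yop (n - 2) p = (\<Sum>j<J. SS Cop (n - 2 + int j) (SS Dop (int j) p))" by (rule Yop_sum[OF b1])
  show ?thesis
    unfolding x1 x2 x3 lin_sum[OF lin_vmul] sum_subtractf[symmetric] per sum_negf sum_distrib_left[symmetric] ..
qed

lemma P2_x1x1: "SS Cop i (SS Dop j (vx 1 (vx 1 q))) - vx 1 (vx 1 (SS Cop i (SS Dop j q)))
   = cpoly (-2) * vx 1 (SS Cop (i - 1) (SS Dop j q)) + SS Cop (i - 2) (SS Dop j q)"
  by (simp add: V_vx U_vx linU' linV' pdv cpoly_mult_mult) (simp add: cpoly_hom algebra_simps)

lemma P2_x1y1: "SS Cop i (SS Dop j (vx 1 (dy 1 q))) - vx 1 (dy 1 (SS Cop i (SS Dop j q)))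
   = - vx 1 (SS Cop (i - 1) (SS Dop j q)) - dy 1 (SS Cop (i - 1) (SS Dop j q)) + SS Cop (i - 2) (SS Dop j q)"
  by (simp add: V_vx V_dy U_vx U_dy linU' linV' pdv cpoly_mult_mult) (simp add: cpoly_hom algebra_simps)

lemma P2_y2: "SS Cop i (SS Dop j (dy 2 q)) - dy 2 (SS Cop i (SS Dop j q)) = - SS Cop (i - 2) (SS Dop j q)"
  by (simp add: V_dy U_dy linU' cpoly_mult_mult) (simp add: cpoly_hom algebra_simps)

lemma P2_Gt: assumes m: "1 \<le> m"
  shows "SS Cop i (SS Dop j (Gt m q)) - Gt m (SS Cop i (SS Dop j q))
   = cpoly (of_nat m) * Cop m (SS Cop (i - 2 - int m) (SS Dop j q))
     + SS Cop i (dy (m + 2) (SS Dop (j - int m) q))"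
proof -
  have m0: "(of_nat m :: complex) \<noteq> 0" using m by simp
  show ?thesis
    using m by (simp add: Gt_def V_vx V_dx V_vy V_dy U_vx U_dx U_vy U_dy linU' linV' pdv cpoly_mult_mult Cop_def nz2 m0 distrib_left right_diff_distrib)
       (simp add: cpoly_hom algebra_simps nz2)
qed

lemma V_rec_shift:
  assumes K: "nat j \<le> K"
  shows "(\<Sum>m\<in>{1..K}. dy (m + 2) (SS Dop (j - int m) q))
     = - (cpoly (of_int j + 2) * SS Dop (j + 2) q) - dy 1 (SS Dop (j + 1) q) - dy 2 (SS Dop j q)"
proof -
  have K2: "nat (j + 2) \<le> K + 2" using K by simp
  have "cpoly (of_int j + 2) * SS Dop (j + 2) q = - (\<Sum>m\<in>{1..K+2}. dy m (SS Dop (j + 2 - int m) q))"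
    using V_rec[OF K2, of q] by simp
  also have "(\<Sum>m\<in>{1..K+2}. dy m (SS Dop (j + 2 - int m) q)) = dy 1 (SS Dop (j + 2 - int 1) q) + dy 2 (SS Dop (j + 2 - int 2) q)
       + (\<Sum>m\<in>{1..K}. dy (m + 2) (SS Dop (j + 2 - int (m + 2)) q))"
    by (rule sum_shift2)
  also have "\<dots> = dy 1 (SS Dop (j + 1) q) + dy 2 (SS Dop j q)
       + (\<Sum>m\<in>{1..K}. dy (m + 2) (SS Dop (j - int m) q))"
    by (simp add: algebra_simps)
  finally have h: "cpoly (of_int j + 2) * SS Dop (j + 2) q = - (dy 1 (SS Dop (j + 1) q) + dy 2 (SS Dop j q)
       + (\<Sum>m\<in>{1..K}. dy (m + 2) (SS Dop (j - int m) q)))" .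
  show ?thesis unfolding h by (simp add: algebra_simps)
qed

lemma P2_fsum:
  "fsum (\<lambda>m. SS Cop i (SS Dop j (Gt m q)) - Gt m (SS Cop i (SS Dop j q)))
   = cpoly (of_int i - 2) * SS Cop (i - 2) (SS Dop j q)
     + SS Cop i (- (cpoly (of_int j + 2) * SS Dop (j + 2) q) - dy 1 (SS Dop (j + 1) q) - dy 2 (SS Dop j q))"
proof -
  define K where "K = nat i + nat j"
  define D where "D m = cpoly (of_nat m) * Cop m (SS Cop (i - 2 - int m) (SS Dop j q))
     + SS Cop i (dy (m + 2) (SS Dop (j - int m) q))" for m
  have "fsum (\<lambda>m. SS Cop i (SS Dop j (Gt m q)) - Gt m (SS Cop i (SS Dop j q))) = (\<Sum>m\<in>{1..K}. SS Cop i (SS Dop j (Gt m q)) - Gt m (SS Cop i (SS Dop j q)))"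
  proof (rule fsum_eq)
    fix m assume "m \<notin> {1..K}"
    then consider "m = 0" | "m > K" by fastforce
    then show "SS Cop i (SS Dop j (Gt m q)) - Gt m (SS Cop i (SS Dop j q)) = 0"
    proof cases
      case 1 then show ?thesis by (simp add: Gt_def linU linV)
    next
      case 2
      then have "i - 2 - int m < 0" "j - int m < 0" by (auto simp: K_def)
      then have "D m = 0" by (simp add: D_def SS_neg lin_zero[OF lin_Cop] pd_zero linU)
      then show ?thesis using 2 P2_Gt[of m i j q] by (simp add: D_def)
    qed
  qed simp
  also have "\<dots> = (\<Sum>m\<in>{1..K}. D m)"
    by (rule sum.cong[OF refl]) (simp add: P2_Gt D_def)
  also have "\<dots> = (\<Sum>m\<in>{1..K}. cpoly (of_nat m) * Cop m (SS Cop (i - 2 - int m) (SS Dop j q)))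
     + SS Cop i (\<Sum>m\<in>{1..K}. dy (m + 2) (SS Dop (j - int m) q))"
    unfolding D_def sum.distrib lin_sum[OF lin_U] ..
  also have "(\<Sum>m\<in>{1..K}. cpoly (of_nat m) * Cop m (SS Cop (i - 2 - int m) (SS Dop j q)))
     = cpoly (of_int (i - 2)) * SS Cop (i - 2) (SS Dop j q)"
    by (rule U_rec[symmetric]) (simp add: K_def)
  also have "(\<Sum>m\<in>{1..K}. dy (m + 2) (SS Dop (j - int m) q))
     = - (cpoly (of_int j + 2) * SS Dop (j + 2) q) - dy 1 (SS Dop (j + 1) q) - dy 2 (SS Dop j q)"
    by (rule V_rec_shift) (simp add: K_def)
  finally show ?thesis by simp
qed

lemma P2_term:
  "SS Cop i (SS Dop j (Lplus c q)) - Lplus c (SS Cop i (SS Dop j q))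
   = cpoly (of_int i - 5/2 + c) * SS Cop (i - 2) (SS Dop j q) + dy 1 (SS Cop (i - 1) (SS Dop j q))
     - cpoly (of_int j + 2) * SS Cop i (SS Dop (j + 2) q) - SS Cop i (dy 1 (SS Dop (j + 1) q))
     - SS Cop i (dy 2 (SS Dop j q))"
proof -
  have linP: "lin (\<lambda>r. SS Cop i (SS Dop j r))" by (rule lin_comp[OF lin_U lin_V])
  let ?X = "SS Cop (i - 1) (SS Dop j q)" and ?Y = "SS Cop (i - 2) (SS Dop j q)"
  have e1: "SS Cop i (SS Dop j (Lplus c q)) - Lplus c (SS Cop i (SS Dop j q))
     = cpoly (1/2) * (cpoly (-2) * vx 1 ?X + ?Y)
       + (cpoly (of_int i - 2) * ?Y
     + SS Cop i (- (cpoly (of_int j + 2) * SS Dop (j + 2) q) - dy 1 (SS Dop (j + 1) q) - dy 2 (SS Dop j q)))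
       - (- vx 1 ?X - dy 1 ?X + ?Y) - cpoly c * (- ?Y)"
    unfolding comm_Lplus[OF linP] P2_x1x1 P2_fsum P2_x1y1 P2_y2 ..
  have e2: "cpoly (1/2) * (cpoly (-2) * vx 1 ?X + ?Y) = - vx 1 ?X + cpoly (1/2) * ?Y"
    by (simp only: distrib_left cpoly_mult_mult) (simp add: cpoly_uminus cpoly_one)
  have e3: "cpoly (of_int i - 5/2 + c) = cpoly (1/2) + cpoly (of_int i - 2) + cpoly c - 1"
    unfolding cpoly_one[symmetric] cpoly_add[symmetric] cpoly_diff[symmetric]
    by (rule arg_cong[where f = cpoly]) simp
  show ?thesis unfolding e1 e2 e3 by (simp add: linU algebra_simps)
qed

lemma V1: "SS Dop 1 q = - dy 1 q"
  using V_rec[of 1 1 q] by (simp add: SS_0 cpoly_one)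

lemma part2: "Yop n (Lplus c p) - Lplus c (Yop n p)
   = cpoly (of_int n - 3/2 + c) * Yop (n - 2) p - Yop n (pd (Yv 2) p)"
proof -
  obtain K1 where K1: "\<And>j. int K1 \<le> j \<Longrightarrow> SS Dop j p = 0" using V_bound by blast
  obtain K2 where K2: "\<And>j. int K2 \<le> j \<Longrightarrow> SS Dop j (Lplus c p) = 0" using V_bound by blast
  define J where "J = K1 + K2 + 2"
  have b1: "\<And>j. j \<ge> J \<Longrightarrow> SS Dop (int j) p = 0" using K1 by (simp add: J_def)
  have b2: "\<And>j. j \<ge> J \<Longrightarrow> SS Dop (int j) (Lplus c p) = 0" using K2 by (simp add: J_def)
  have b3: "\<And>j. j \<ge> J \<Longrightarrow> SS Dop (int j) (dy 2 p) = 0" using K1 by (simp add: J_def V_dy pd_zero)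
  define H where "H j = SS Cop (n + j - 1) (dy 1 (SS Dop j p))" for j
  define Kf where "Kf j = cpoly (of_int j) * SS Cop (n + j - 2) (SS Dop j p)" for j
  define Yt where "Yt j = SS Cop (n + j - 2) (SS Dop j p)" for j
  define Z where "Z j = SS Cop (n + j) (SS Dop j (dy 2 p))" for j
  have per: "SS Cop (n + int j) (SS Dop (int j) (Lplus c p)) - Lplus c (SS Cop (n + int j) (SS Dop (int j) p))
     = cpoly (of_int n - 3/2 + c) * Yt (int j) + (Kf (int j) - Kf (int j + 2)) + (H (int j) - H (int j + 1)) - Z (int j)" for j
  proof -
    have c1: "cpoly (of_int (n + int j) - 5/2 + c) = cpoly (of_int n - 3/2 + c) + cpoly (of_int (int j)) - 1"
      unfolding cpoly_one[symmetric] cpoly_add[symmetric] cpoly_diff[symmetric]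
      by (rule arg_cong[where f = cpoly]) simp
    show ?thesis
      unfolding P2_term c1 H_def Kf_def Yt_def Z_def
      by (simp add: U_dy V_dy linU' cpoly_uminus cpoly_one algebra_simps)
  qed
  have x1: "Yop n (Lplus c p) = (\<Sum>j<J. SS Cop (n + int j) (SS Dop (int j) (Lplus c p)))" by (rule Yop_sum[OF b2])
  have x2: "Yop n p = (\<Sum>j<J. SS Cop (n + int j) (SS Dop (int j) p))" by (rule Yop_sum[OF b1])
  have "Yop n (Lplus c p) - Lplus c (Yop n p)
      = (\<Sum>j<J. SS Cop (n + int j) (SS Dop (int j) (Lplus c p)) - Lplus c (SS Cop (n + int j) (SS Dop (int j) p)))"
    unfolding x1 x2 lin_sum[OF lin_Lplus] sum_subtractf ..
  also have "\<dots> = cpoly (of_int n - 3/2 + c) * (\<Sum>j<J. Yt (int j)) + ((\<Sum>j<J. Kf (int j) - Kf (int j + 2))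
      + (\<Sum>j<J. H (int j) - H (int j + 1))) - (\<Sum>j<J. Z (int j))"
    unfolding per sum.distrib sum_subtractf sum_distrib_left by (simp only: add.assoc)
  also have "(\<Sum>j<J. Kf (int j) - Kf (int j + 2)) + (\<Sum>j<J. H (int j) - H (int j + 1)) = 0"
  proof -
    have "SS Dop (int J) p = 0" "SS Dop (int J + 1) p = 0" using K1 by (simp_all add: J_def)
    then show ?thesis unfolding tele3 tele4 unfolding Kf_def H_def
      by (simp add: V1 SS_0 linU cpoly_zero cpoly_one pd_zero)
  qed
  also have "(\<Sum>j<J. Yt (int j)) = Yop (n - 2) p"
  proof -
    have "Yop (n - 2) p = (\<Sum>j<J. SS Cop (n - 2 + int j) (SS Dop (int j) p))" by (rule Yop_sum[OF b1])
    then show ?thesis unfolding Yt_def by (simp add: algebra_simps)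
  qed
  also have "(\<Sum>j<J. Z (int j)) = Yop n (dy 2 p)"
    unfolding Z_def by (rule Yop_sum[OF b3, symmetric])
  finally show ?thesis by (simp add: algebra_simps)
qed


theorem lemma4p4:
  fixes kappa :: complex and N :: nat and theta :: "nat \<Rightarrow> complex" and n :: int
  defines "c \<equiv> - kappa + (\<Sum>i=1..N. theta i)"
  shows "\<forall>p. in_R p \<longrightarrow>
     Xop n (Lplus c p) - Lplus c (Xop n p)
       = - (cpoly (of_int n + 3/2) * Xop (n + 2) p)
         + (cpoly 2 * vmul (Xv 2) (Xop n p) - pd (Yv 2) (Xop n p))
   \<and> Yop n (Lplus c p) - Lplus c (Yop n p)
       = cpoly (of_int n - 3/2 - kappa + (\<Sum>i=1..N. theta i)) * Yop (n - 2) p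
         - Yop n (pd (Yv 2) p)
   \<and> Xop n (vmul (Xv 2) p) - vmul (Xv 2) (Xop n p) = - (cpoly (1/2) * Xop (n + 2) p)
   \<and> Yop n (vmul (Xv 2) p) - vmul (Xv 2) (Yop n p) = - (cpoly (1/2) * Yop (n - 2) p)"
proof (intro allI impI conjI)
  fix p
  show "Xop n (Lplus c p) - Lplus c (Xop n p)
       = - (cpoly (of_int n + 3/2) * Xop (n + 2) p)
         + (cpoly 2 * vmul (Xv 2) (Xop n p) - pd (Yv 2) (Xop n p))"
    by (rule part1)
  have e: "of_int n - 3/2 - kappa + (\<Sum>i=1..N. theta i) = of_int n - 3/2 + c"
    unfolding c_def by simp
  show "Yop n (Lplus c p) - Lplus c (Yop n p)
       = cpoly (of_int n - 3/2 - kappa + (\<Sum>i=1..N. theta i)) * Yop (n - 2) p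
         - Yop n (pd (Yv 2) p)"
    unfolding e by (rule part2)
  show "Xop n (vmul (Xv 2) p) - vmul (Xv 2) (Xop n p) = - (cpoly (1/2) * Xop (n + 2) p)"
    by (rule part3)
  show "Yop n (vmul (Xv 2) p) - vmul (Xv 2) (Yop n p) = - (cpoly (1/2) * Yop (n - 2) p)"
    by (rule part4)
qed

end
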